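(* Let $I\subset\mathbb R$ be a bounded open interval, $\lambda\in(0,\lambda_1(I))$, and $a(J)=\inf_{u\in N(J)}J(u)$ as below. Then $a(J)<\pi$.
   Context: $H:=\tilde H^{\frac12,2}(I)=\{u\in L^2(\mathbb R):(-\Delta)^{1/4}u\in L^2(\mathbb R),\ u=0\text{ a.e. in }\mathbb R\setminus I\}$, where $(-\Delta)^{1/4}$ is the fractional Laplacian ($\widehat{(-\Delta)^{1/4}u}=|\xi|^{1/2}\hat u$), with inner product $(u,v)_H=\int_{\mathbb R}(-\Delta)^{1/4}u(-\Delta)^{1/4}v\,dx$ and norm $\|u\|_H=(u,u)_H^{1/2}$. $J(u)=\frac12\|u\|_H^2-\lambda\int_I(e^{\frac12u^2}-1)dx$, $\langle J'(u),v\rangle=(u,v)_H-\lambda\int_Iuv\,e^{\frac12u^2}dx$, $N(J)=\{u\in H\setminus\{0\}:\langle J'(u),u\rangle=0\}$. $\lambda_1(I):=\min_{u\in H\setminus\{0\}}\|u\|_H^2/\int_Iu^2dx$. *)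

theory Defs
  imports "HOL-Analysis.Analysis"
begin

text \<open>Unitary Fourier transform of a real function (for compactly supported
  square integrable functions, which are integrable, this is a Lebesgue integral).\<close>
definition fourier :: "(real \<Rightarrow> real) \<Rightarrow> real \<Rightarrow> complex" where
  "fourier u \<xi> = (LINT x|lborel. complex_of_real (u x) * cis (- (x * \<xi>))) / complex_of_real (sqrt (2 * pi))"

text \<open>The space H = tilde H^{1/2,2}(I) for I = (a,b).  By Plancherel,
  (-Delta)^{1/4} u is in L^2 iff |xi|^{1/2} fourier u is in L^2.\<close>
definition Hspace :: "real \<Rightarrow> real \<Rightarrow> (real \<Rightarrow> real) set" where
  "Hspace a b = {u. u \<in> borel_measurable lborel
      \<and> integrable lborel (\<lambda>x. (u x)\<^sup>2)
      \<and> integrable lborel (\<lambda>\<xi>. \<bar>\<xi>\<bar> * (cmod (fourier u \<xi>))\<^sup>2)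
      \<and> (AE x in lborel. x \<notin> {a<..<b} \<longrightarrow> u x = 0)}"

text \<open>(u,v)_H = int (-Delta)^{1/4}u (-Delta)^{1/4}v dx, written on the Fourier side
  via Parseval: int |xi| Re(fourier u * conj(fourier v)) dxi.\<close>
definition Hinner :: "(real \<Rightarrow> real) \<Rightarrow> (real \<Rightarrow> real) \<Rightarrow> real" where
  "Hinner u v = (LINT \<xi>|lborel. \<bar>\<xi>\<bar> * Re (fourier u \<xi> * cnj (fourier v \<xi>)))"

definition Hnorm :: "(real \<Rightarrow> real) \<Rightarrow> real" where
  "Hnorm u = sqrt (Hinner u u)"

definition Hzero :: "(real \<Rightarrow> real) \<Rightarrow> bool" where
  "Hzero u \<longleftrightarrow> (AE x in lborel. u x = 0)"

definition Jfun :: "real \<Rightarrow> real \<Rightarrow> real \<Rightarrow> (real \<Rightarrow> real) \<Rightarrow> real" where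
  "Jfun a b lam u = (1/2) * (Hnorm u)\<^sup>2 - lam * (LINT x:{a<..<b}|lborel. exp ((1/2) * (u x)\<^sup>2) - 1)"

definition Jderiv :: "real \<Rightarrow> real \<Rightarrow> real \<Rightarrow> (real \<Rightarrow> real) \<Rightarrow> (real \<Rightarrow> real) \<Rightarrow> real" where
  "Jderiv a b lam u v = Hinner u v - lam * (LINT x:{a<..<b}|lborel. u x * v x * exp ((1/2) * (u x)\<^sup>2))"

definition Nehari :: "real \<Rightarrow> real \<Rightarrow> real \<Rightarrow> (real \<Rightarrow> real) set" where
  "Nehari a b lam = {u \<in> Hspace a b. \<not> Hzero u \<and> Jderiv a b lam u u = 0}"

definition lambda1 :: "real \<Rightarrow> real \<Rightarrow> real" where
  "lambda1 a b = Inf {(Hnorm u)\<^sup>2 / (LINT x:{a<..<b}|lborel. (u x)\<^sup>2) | u. u \<in> Hspace a b \<and> \<not> Hzero u}"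

definition aJ :: "real \<Rightarrow> real \<Rightarrow> real \<Rightarrow> real" where
  "aJ a b lam = Inf (Jfun a b lam ` Nehari a b lam)"

end

theory Submission
  imports Defs "HOL-Probability.Sinc_Integral"
begin


lemma sinc_abs_le1: "\<bar>sinc x\<bar> \<le> 1"
proof (cases "x = 0")
  case False
  have "\<bar>sin x\<bar> \<le> \<bar>x\<bar>" by (rule abs_sin_x_le_abs_x)
  with False show ?thesis by (simp add: abs_divide divide_le_eq_1)
qed simp

lemma Si_0[simp]: "Si 0 = 0"
  using Si_neg[of 0] by simp

lemma Si_odd: "Si (- x) = - Si x"
proof (cases "x \<ge> 0")
  case True then show ?thesis by (rule Si_neg)
next
  case False
  then have "Si (- (-x)) = - Si (-x)" by (intro Si_neg) simp
  then show ?thesis by simp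
qed

lemma Si_lip: "\<bar>Si x - Si y\<bar> \<le> \<bar>x - y\<bar>"
proof -
  have main: "\<bar>Si b - Si a\<bar> \<le> b - a" if "a < b" for a b
  proof -
    have "\<exists>z>a. z < b \<and> Si b - Si a = (b - a) * sinc z"
      by (rule MVT2[OF that]) (rule DERIV_Si)
    then obtain z where "Si b - Si a = (b - a) * sinc z" by blast
    then have "\<bar>Si b - Si a\<bar> = (b - a) * \<bar>sinc z\<bar>" using that by (simp add: abs_mult)
    also have "\<dots> \<le> (b - a) * 1" using that sinc_abs_le1[of z] by (intro mult_left_mono) auto
    finally show ?thesis by simp
  qed
  show ?thesis
  proof (cases x y rule: linorder_cases)
    case less then show ?thesis using main[OF less] by (simp add: abs_minus_commute)
  next
    case greater then show ?thesis using main[OF greater] by simp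
  qed simp
qed

lemma Si_le: "0 \<le> x \<Longrightarrow> Si x \<le> x"
  using Si_lip[of x 0] by simp

lemma Si_nonneg: assumes "0 \<le> x" "x \<le> pi" shows "0 \<le> Si x"
proof -
  have "Si 0 \<le> Si x"
  proof (rule DERIV_nonneg_imp_increasing_open[OF assms(1)])
    fix t assume t: "0 < t" "t < x"
    then have "sin t > 0" using assms by (intro sin_gt_zero) auto
    then have "0 \<le> sinc t" using t by auto
    then show "\<exists>y. (Si has_real_derivative y) (at t) \<and> 0 \<le> y" using DERIV_Si by blast
  next
    show "continuous_on {0..x} Si" by (intro continuous_at_imp_continuous_on ballI isCont_Si)
  qed
  then show ?thesis by simp
qed

lemma Si_diff_bound:
  assumes A: "0 < A" "A \<le> B"
  shows "\<bar>Si B - Si A\<bar> \<le> 2 / A"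
proof -
  define E where "E x = Si x + cos x / x" for x
  have dE: "(E has_real_derivative (- cos x / x\<^sup>2)) (at x)" if "x > 0" for x
  proof -
    have "(E has_real_derivative sinc x + ((- sin x) * x - cos x * 1) / x\<^sup>2) (at x)"
      unfolding E_def using that
      by (auto intro!: derivative_eq_intros DERIV_Si simp: power2_eq_square)
    moreover have "sinc x + ((- sin x) * x - cos x * 1) / x\<^sup>2 = - cos x / x\<^sup>2"
      using that by (simp add: field_simps power2_eq_square)
    ultimately show ?thesis by simp
  qed
  have up: "(\<lambda>x. E x + 1 / x) B \<le> (\<lambda>x. E x + 1 / x) A"
  proof -
    have "(\<lambda>x. - (E x + 1 / x)) A \<le> (\<lambda>x. - (E x + 1 / x)) B"
    proof (rule DERIV_nonneg_imp_increasing_open[OF A(2)])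
      fix t assume t: "A < t" "t < B"
      then have tp: "t > 0" using A by simp
      have "((\<lambda>x. - (E x + 1 / x)) has_real_derivative - (- cos t / t\<^sup>2 + (- 1 / t\<^sup>2))) (at t)"
        using tp by (auto intro!: derivative_eq_intros dE simp: power2_eq_square field_simps)
      moreover have "0 \<le> - (- cos t / t\<^sup>2 + (- 1 / t\<^sup>2))"
        using cos_le_one[of t] tp by (simp add: field_simps)
      ultimately show "\<exists>y. ((\<lambda>x. - (E x + 1 / x)) has_real_derivative y) (at t) \<and> 0 \<le> y" by blast
    next
      have "(\<lambda>x. - (E x + 1 / x)) = (\<lambda>x. - (E x + 1 / x))" ..
      show "continuous_on {A..B} (\<lambda>x. - (E x + 1 / x))"
        using A unfolding E_def
        by (intro continuous_intros continuous_at_imp_continuous_on ballI isCont_Si) auto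
    qed
    then show ?thesis by simp
  qed
  have lo: "(\<lambda>x. E x - 1 / x) A \<le> (\<lambda>x. E x - 1 / x) B"
  proof (rule DERIV_nonneg_imp_increasing_open[OF A(2)])
    fix t assume t: "A < t" "t < B"
    then have tp: "t > 0" using A by simp
    have "((\<lambda>x. E x - 1 / x) has_real_derivative (- cos t / t\<^sup>2 - (- 1 / t\<^sup>2))) (at t)"
      using tp by (auto intro!: derivative_eq_intros dE simp: power2_eq_square field_simps)
    moreover have "0 \<le> (- cos t / t\<^sup>2 - (- 1 / t\<^sup>2))"
      using cos_le_one[of t] tp by (simp add: field_simps)
    ultimately show "\<exists>y. ((\<lambda>x. E x - 1 / x) has_real_derivative y) (at t) \<and> 0 \<le> y" by blast
  next
    show "continuous_on {A..B} (\<lambda>x. E x - 1 / x)"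
      using A unfolding E_def
      by (intro continuous_intros continuous_at_imp_continuous_on ballI isCont_Si) auto
  qed
  have eq: "Si B - Si A = (E B - E A) - cos B / B + cos A / A" by (simp add: E_def)
  have c1: "\<bar>cos B / B\<bar> \<le> 1 / B" using A abs_cos_le_one[of B] by (simp add: abs_divide divide_right_mono)
  have c2: "\<bar>cos A / A\<bar> \<le> 1 / A" using A abs_cos_le_one[of A] by (simp add: abs_divide divide_right_mono)
  have "\<bar>E B - E A\<bar> \<le> 1 / A - 1 / B" using up lo by simp
  then show ?thesis using eq c1 c2 unfolding abs_le_iff by linarith
qed

lemma Si_pi2: assumes "0 < x" shows "\<bar>Si x - pi / 2\<bar> \<le> 2 / x"
proof -
  have "((\<lambda>B. \<bar>Si B - Si x\<bar>) \<longlongrightarrow> \<bar>pi / 2 - Si x\<bar>) at_top"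
    by (intro tendsto_intros Si_at_top)
  moreover have "eventually (\<lambda>B. \<bar>Si B - Si x\<bar> \<le> 2 / x) at_top"
    using eventually_ge_at_top[of x] by eventually_elim (rule Si_diff_bound[OF assms])
  ultimately have "\<bar>pi / 2 - Si x\<bar> \<le> 2 / x"
    by (rule tendsto_upperbound) simp
  then show ?thesis by (simp add: abs_minus_commute)
qed


definition Dfun :: "real \<Rightarrow> real \<Rightarrow> real" where
  "Dfun L \<eta> = Si \<eta> - Si (exp (- L) * \<eta>)"

definition Qfun :: "real \<Rightarrow> real \<Rightarrow> real" where
  "Qfun L \<eta> = (Dfun L \<eta>)\<^sup>2 / \<bar>\<eta>\<bar>"

definition C1 :: real where "C1 = pi\<^sup>2 / 4 + 4 * pi + 8"

definition Bfun :: "real \<Rightarrow> real \<Rightarrow> real" where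
  "Bfun L \<eta> = (pi\<^sup>2 / 4) * (if \<bar>\<eta>\<bar> \<le> exp L then \<bar>\<eta>\<bar> / (1 + \<eta>\<^sup>2) else 0)
     + C1 / (1 + \<eta>\<^sup>2) + 8 * exp L / ((exp L)\<^sup>2 + \<eta>\<^sup>2)"

lemma Dfun_odd: "Dfun L (- x) = - Dfun L x"
  by (simp add: Dfun_def Si_odd)

lemma Qfun_even: "Qfun L (- x) = Qfun L x"
  by (simp add: Qfun_def Dfun_odd)

lemma Bfun_even: "Bfun L (- x) = Bfun L x"
  by (simp add: Bfun_def)

lemma D_small: assumes "L > 0" shows "\<bar>Dfun L x\<bar> \<le> \<bar>x\<bar>"
proof -
  have m: "0 < exp (-L)" "exp (-L) < 1" using assms by auto
  have "\<bar>Dfun L x\<bar> \<le> \<bar>x - exp (-L) * x\<bar>" unfolding Dfun_def by (rule Si_lip)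
  also have "\<dots> = \<bar>(1 - exp (-L)) * x\<bar>" by (simp add: algebra_simps)
  also have "\<dots> = (1 - exp (-L)) * \<bar>x\<bar>" using m by (simp add: abs_mult)
  also have "\<dots> \<le> \<bar>x\<bar>" using m mult_right_mono[of "1 - exp(-L)" 1 "\<bar>x\<bar>"] by simp
  finally show ?thesis .
qed

lemma D_mid: assumes "L > 0" "0 < x" "x \<le> exp L"
  shows "\<bar>Dfun L x\<bar> \<le> pi / 2 + 2 / x"
proof -
  have mx: "0 \<le> exp (-L) * x" "exp (-L) * x \<le> 1"
    using assms by (auto simp: exp_minus field_simps)
  have s1: "0 \<le> Si (exp (-L) * x)" using mx pi_gt3 by (intro Si_nonneg) auto
  have s2: "Si (exp (-L) * x) \<le> 1" using Si_le[OF mx(1)] mx by linarith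
  have s3: "\<bar>Si x - pi / 2\<bar> \<le> 2 / x" using Si_pi2 assms by simp
  have "2 / x > 0" using assms by simp
  then show ?thesis using s1 s2 s3 pi_gt3 unfolding Dfun_def abs_le_iff by linarith
qed

lemma D_large: assumes "L > 0" "exp L \<le> x"
  shows "\<bar>Dfun L x\<bar> \<le> 2 / (exp (-L) * x)"
proof -
  have "x > 0" using assms exp_gt_zero[of L] by linarith
  then have A: "0 < exp (-L) * x" by simp
  have "exp (-L) \<le> 1" using assms by simp
  then have "exp (-L) * x \<le> x" using \<open>x > 0\<close> mult_right_mono[of "exp(-L)" 1 x] by simp
  then have "\<bar>Si x - Si (exp (-L) * x)\<bar> \<le> 2 / (exp (-L) * x)"
    using Si_diff_bound[OF A] by simp
  then show ?thesis by (simp add: Dfun_def)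
qed

lemma sq_le_of_abs: "\<bar>d\<bar> \<le> (e::real) \<Longrightarrow> d\<^sup>2 \<le> e\<^sup>2"
  by (metis abs_ge_zero power2_abs power_mono)

lemma C1_ge: "C1 \<ge> 2" unfolding C1_def using pi_gt3 by (simp add: add_increasing)

lemma Bfun_nonneg: "0 \<le> Bfun L x"
  unfolding Bfun_def using C1_ge
  by (intro add_nonneg_nonneg mult_nonneg_nonneg divide_nonneg_pos) (auto simp: add_pos_nonneg)

lemma Q_le_B_pos: assumes "L > 0" "x > 0" shows "Qfun L x \<le> Bfun L x"
proof -
  define M where "M = exp L"
  have M1: "M > 1" using assms by (simp add: M_def)
  have m: "exp (-L) = 1 / M" by (simp add: M_def exp_minus field_simps)
  have t1: "0 \<le> (pi\<^sup>2 / 4) * (if \<bar>x\<bar> \<le> exp L then \<bar>x\<bar> / (1 + x\<^sup>2) else 0)" by auto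
  have t2: "0 \<le> C1 / (1 + x\<^sup>2)" using C1_ge by (simp add: add_pos_nonneg)
  have t3: "0 \<le> 8 * exp L / ((exp L)\<^sup>2 + x\<^sup>2)" by (simp add: add_pos_nonneg)
  consider "x \<le> 1" | "1 < x" "x \<le> M" | "M < x" by linarith
  then show ?thesis
  proof cases
    case 1
    have "(Dfun L x)\<^sup>2 \<le> x\<^sup>2" using D_small[OF assms(1), of x] by (simp add: abs_le_square_iff)
    then have "Qfun L x \<le> x\<^sup>2 / x" unfolding Qfun_def using assms
      by (simp add: divide_right_mono)
    also have "\<dots> = x" by (simp add: power2_eq_square)
    also have "\<dots> \<le> 2 / (1 + x\<^sup>2)"
    proof -
      have "x * (1 + x * x) \<le> 1 * (1 + 1 * 1)" using 1 assms
        by (intro mult_mono add_mono) auto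
      then show ?thesis by (simp add: le_divide_eq add_pos_nonneg power2_eq_square)
    qed
    also have "\<dots> \<le> C1 / (1 + x\<^sup>2)" using C1_ge by (simp add: divide_right_mono add_pos_nonneg)
    finally show ?thesis unfolding Bfun_def using t1 t3 by linarith
  next
    case 2
    have D: "\<bar>Dfun L x\<bar> \<le> pi / 2 + 2 / x" using D_mid assms 2 M_def by simp
    have "Qfun L x \<le> (pi / 2 + 2 / x)\<^sup>2 / x" unfolding Qfun_def using assms sq_le_of_abs[OF D]
      by (simp add: divide_right_mono)
    also have "\<dots> = pi\<^sup>2 / 4 * (1 / x) + 2 * pi * (1 / x\<^sup>2) + 4 * (1 / x ^ 3)"
      using assms by (simp add: field_simps power2_eq_square power3_eq_cube)
    also have "\<dots> \<le> pi\<^sup>2 / 4 * (x / (1 + x\<^sup>2) + 1 / (1 + x\<^sup>2)) + 2 * pi * (2 / (1 + x\<^sup>2)) + 4 * (2 / (1 + x\<^sup>2))"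
    proof -
      have a0: "1 * (1 + x\<^sup>2) \<le> (x + 1) * x" using 2 by (simp add: algebra_simps power2_eq_square)
      have p: "0 < x * (1 + x\<^sup>2)" using 2 by (simp add: add_pos_nonneg)
      have q: "1 + x\<^sup>2 \<noteq> 0" using zero_le_power2[of x] by linarith
      have e1: "1 / x = 1 * (1 + x\<^sup>2) / (x * (1 + x\<^sup>2))" using p q by simp
      have e2: "(x + 1) / (1 + x\<^sup>2) = (x + 1) * x / (x * (1 + x\<^sup>2))" using p 2 by simp
      have "1 / x \<le> (x + 1) / (1 + x\<^sup>2)" unfolding e1 e2 using a0 p
        by (intro divide_right_mono) auto
      then have a: "1 / x \<le> x / (1 + x\<^sup>2) + 1 / (1 + x\<^sup>2)" by (simp add: add_divide_distrib)
      have xx: "1 \<le> x * x" using 2 mult_mono[of 1 x 1 x] by simp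
      have b: "1 / x\<^sup>2 \<le> 2 / (1 + x\<^sup>2)" using 2 xx
        by (simp add: field_simps power2_eq_square add_pos_nonneg)
      have c: "1 / x ^ 3 \<le> 2 / (1 + x\<^sup>2)"
      proof -
        have "1 / x ^ 3 \<le> 1 / x\<^sup>2" using 2
          by (intro divide_left_mono) (auto simp: power2_eq_square power3_eq_cube)
        then show ?thesis using b by linarith
      qed
      show ?thesis using a b c pi_gt3
        by (intro add_mono mult_left_mono) auto
    qed
    also have "\<dots> = pi\<^sup>2 / 4 * (x / (1 + x\<^sup>2)) + C1 / (1 + x\<^sup>2)"
    proof -
      have "pi\<^sup>2 / 4 * (x / d + 1 / d) + 2 * pi * (2 / d) + 4 * (2 / d) =
            pi\<^sup>2 / 4 * (x / d) + (pi\<^sup>2 / 4 + 4 * pi + 8) / d" for d :: real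
        by (simp add: algebra_simps add_divide_distrib)
      then show ?thesis unfolding C1_def by blast
    qed
    finally have qq: "Qfun L x \<le> pi\<^sup>2 / 4 * (x / (1 + x\<^sup>2)) + C1 / (1 + x\<^sup>2)" .
    have eq: "(if \<bar>x\<bar> \<le> exp L then \<bar>x\<bar> / (1 + x\<^sup>2) else 0) = x / (1 + x\<^sup>2)"
      using 2 assms M_def by simp
    show ?thesis unfolding Bfun_def eq using t3 qq by linarith
  next
    case 3
    have D: "\<bar>Dfun L x\<bar> \<le> 2 / (exp (-L) * x)" using D_large assms 3 M_def by simp
    then have D': "\<bar>Dfun L x\<bar> \<le> 2 * M / x" using m by simp
    have "Qfun L x \<le> (2 * M / x)\<^sup>2 / x" unfolding Qfun_def using assms sq_le_of_abs[OF D']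
      by (simp add: divide_right_mono)
    also have "\<dots> \<le> 8 * M / (M\<^sup>2 + x\<^sup>2)"
    proof -
      have "M * (M\<^sup>2 + x\<^sup>2) \<le> 2 * x ^ 3"
      proof -
        have "M ^ 3 \<le> x ^ 3" using 3 M1 by (intro power_mono) auto
        moreover have "M * x\<^sup>2 \<le> x * x\<^sup>2" using 3 by (intro mult_right_mono) auto
        ultimately show ?thesis by (simp add: power2_eq_square power3_eq_cube algebra_simps)
      qed
      then have "4 * M * (M * (M\<^sup>2 + x\<^sup>2)) \<le> 4 * M * (2 * x ^ 3)" using M1
        by (intro mult_left_mono) auto
      then show ?thesis using M1 3
        by (simp add: field_simps power2_eq_square power3_eq_cube add_pos_pos)
    qed
    finally show ?thesis unfolding Bfun_def using t1 t2 unfolding M_def by linarith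
  qed
qed

lemma Q_le_B: assumes "L > 0" shows "Qfun L x \<le> Bfun L x"
proof -
  consider "x > 0" | "x = 0" | "x < 0" by linarith
  then show ?thesis
  proof cases
    case 1 then show ?thesis using Q_le_B_pos[OF assms] by simp
  next
    case 2 then show ?thesis using Bfun_nonneg by (simp add: Qfun_def)
  next
    case 3 then show ?thesis using Q_le_B_pos[OF assms, of "-x"] by (simp add: Qfun_even Bfun_even)
  qed
qed

lemma Qfun_nonneg: "0 \<le> Qfun L x" by (simp add: Qfun_def)

lemma Qfun_measurable[measurable]: "Qfun L \<in> borel_measurable borel"
  unfolding Qfun_def[abs_def] Dfun_def by measurable


lemma inv1_integrable: "integrable lborel (\<lambda>x::real. 1 / (1 + x\<^sup>2))"
  and inv1_integral: "(LINT x|lborel. 1 / (1 + x\<^sup>2)) = (pi::real)"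
proof -
  have U: "einterval (-\<infinity>) \<infinity> = (UNIV :: real set)" by (auto simp: einterval_iff)
  show "integrable lborel (\<lambda>x::real. 1 / (1 + x\<^sup>2))"
    using integrable_inverse_1_plus_square unfolding set_integrable_def U
    by (simp add: inverse_eq_divide)
  show "(LINT x|lborel. 1 / (1 + x\<^sup>2)) = (pi::real)"
    using LBINT_inverse_1_plus_square
    unfolding interval_lebesgue_integral_def set_lebesgue_integral_def U
    by (simp add: inverse_eq_divide)
qed

lemma inv2_integrable: assumes "M > 0" shows "integrable lborel (\<lambda>x::real. 8 * M / (M\<^sup>2 + x\<^sup>2))"
  and inv2_integral: "(LINT x|lborel. 8 * M / (M\<^sup>2 + x\<^sup>2)) = 8 * pi"
proof -
  have eq: "8 * M / (M\<^sup>2 + x\<^sup>2) = (8 / M) * (1 / (1 + (0 + (1 / M) * x)\<^sup>2))" for x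
    using assms by (simp add: field_simps power2_eq_square add_pos_nonneg)
  have c: "(1 / M :: real) \<noteq> 0" using assms by simp
  have i1: "integrable lborel (\<lambda>x. 1 / (1 + (0 + (1 / M) * x)\<^sup>2))"
    using lborel_integrable_real_affine_iff[OF c, of "\<lambda>y. 1 / (1 + y\<^sup>2)" 0] inv1_integrable by simp
  show "integrable lborel (\<lambda>x::real. 8 * M / (M\<^sup>2 + x\<^sup>2))"
    unfolding eq by (rule integrable_mult_right[OF i1])
  have "pi = \<bar>1 / M\<bar> *\<^sub>R (LINT x|lborel. 1 / (1 + (0 + (1 / M) * x)\<^sup>2))"
    using lborel_integral_real_affine[OF c, of "\<lambda>y. 1 / (1 + y\<^sup>2)" 0] inv1_integral by simp
  then have "(LINT x|lborel. 1 / (1 + (0 + (1 / M) * x)\<^sup>2)) = M * pi" using assms by (auto simp: field_simps)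
  then show "(LINT x|lborel. 8 * M / (M\<^sup>2 + x\<^sup>2)) = 8 * pi"
    unfolding eq integral_mult_right_zero using assms by simp
qed

lemma g1_integrable: assumes "M > 0"
  shows "integrable lborel (\<lambda>x::real. if \<bar>x\<bar> \<le> M then \<bar>x\<bar> / (1 + x\<^sup>2) else 0)"
  and g1_integral: "(LINT x|lborel. (if \<bar>x\<bar> \<le> M then \<bar>x\<bar> / (1 + x\<^sup>2) else 0)) = ln (1 + M\<^sup>2)"
proof -
  have pos: "0 < 1 + x\<^sup>2" for x :: real by (simp add: add_pos_nonneg)
  have eq: "(\<lambda>x::real. if \<bar>x\<bar> \<le> M then \<bar>x\<bar> / (1 + x\<^sup>2) else 0) =
      (\<lambda>x. indicator {-M..0} x *\<^sub>R (- x / (1 + x\<^sup>2)) + indicator {0..M} x *\<^sub>R (x / (1 + x\<^sup>2)))"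
  proof
    fix x :: real
    show "(if \<bar>x\<bar> \<le> M then \<bar>x\<bar> / (1 + x\<^sup>2) else 0) =
      indicator {-M..0} x *\<^sub>R (- x / (1 + x\<^sup>2)) + indicator {0..M} x *\<^sub>R (x / (1 + x\<^sup>2))"
      by (cases "x < 0"; cases "\<bar>x\<bar> \<le> M") (auto simp: indicator_def)
  qed
  have c1: "continuous_on {-M..0} (\<lambda>x::real. - x / (1 + x\<^sup>2))"
    using pos by (intro continuous_intros) (auto simp: add_nonneg_eq_0_iff)
  have c2: "continuous_on {0..M} (\<lambda>x::real. x / (1 + x\<^sup>2))"
    using pos by (intro continuous_intros) (auto simp: add_nonneg_eq_0_iff)
  have i1: "integrable lborel (\<lambda>x. indicator {-M..0} x *\<^sub>R (- x / (1 + x\<^sup>2)))"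
    using borel_integrable_atLeastAtMost'[OF c1] unfolding set_integrable_def .
  have i2: "integrable lborel (\<lambda>x. indicator {0..M} x *\<^sub>R (x / (1 + x\<^sup>2)))"
    using borel_integrable_atLeastAtMost'[OF c2] unfolding set_integrable_def .
  show "integrable lborel (\<lambda>x::real. if \<bar>x\<bar> \<le> M then \<bar>x\<bar> / (1 + x\<^sup>2) else 0)"
    unfolding eq by (rule Bochner_Integration.integrable_add[OF i1 i2])
  have dl: "((\<lambda>x. ln (1 + x\<^sup>2) / 2) has_real_derivative (x / (1 + x\<^sup>2))) (at x)" for x :: real
  proof -
    have d0: "((\<lambda>x. 1 + x\<^sup>2) has_real_derivative (2 * x)) (at x)"
      using DERIV_add[OF DERIV_const[of 1] DERIV_pow[of 2 x]] by simp
    have "((\<lambda>x. ln (1 + x\<^sup>2)) has_real_derivative (1 / (1 + x\<^sup>2) * (2 * x))) (at x)"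
      by (rule DERIV_chain2[OF DERIV_ln_divide[OF pos[of x]] d0])
    then have "((\<lambda>x. ln (1 + x\<^sup>2) / 2) has_real_derivative (1 / (1 + x\<^sup>2) * (2 * x) / 2)) (at x)"
      by (rule DERIV_cdivide)
    moreover have gen: "1 / a * (2 * x) / 2 = x / a" for a :: real
      by simp
    ultimately show ?thesis by (simp only: gen)
  qed
  have d1: "((\<lambda>x. - ln (1 + x\<^sup>2) / 2) has_vector_derivative (- x / (1 + x\<^sup>2))) (at x within {-M..0})" for x :: real
  proof -
    have "((\<lambda>x. - (ln (1 + x\<^sup>2) / 2)) has_real_derivative - (x / (1 + x\<^sup>2))) (at x)"
      using dl[of x] by (rule DERIV_minus)
    then show ?thesis
      by (simp add: has_real_derivative_iff_has_vector_derivative[symmetric] has_field_derivative_at_within)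
  qed
  have d2: "((\<lambda>x. ln (1 + x\<^sup>2) / 2) has_vector_derivative (x / (1 + x\<^sup>2))) (at x within {0..M})" for x :: real
    using dl[of x]
    by (simp add: has_real_derivative_iff_has_vector_derivative[symmetric] has_field_derivative_at_within)
  have I1: "(LINT x|lborel. indicator {-M..0} x *\<^sub>R (- x / (1 + x\<^sup>2))) = ln (1 + M\<^sup>2) / 2"
    using integral_FTC_atLeastAtMost[of "-M" 0 "\<lambda>x. - ln (1 + x\<^sup>2) / 2", OF _ d1 c1] assms
    by (simp add: power2_eq_square)
  have I2: "(LINT x|lborel. indicator {0..M} x *\<^sub>R (x / (1 + x\<^sup>2))) = ln (1 + M\<^sup>2) / 2"
    using integral_FTC_atLeastAtMost[of 0 M "\<lambda>x. ln (1 + x\<^sup>2) / 2", OF _ d2 c2] assms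
    by (simp add: power2_eq_square)
  show "(LINT x|lborel. (if \<bar>x\<bar> \<le> M then \<bar>x\<bar> / (1 + x\<^sup>2) else 0)) = ln (1 + M\<^sup>2)"
    unfolding eq Bochner_Integration.integral_add[OF i1 i2] I1 I2 by simp
qed

lemma Bfun_integrable: assumes "L > 0" shows "integrable lborel (Bfun L)"
  and Bfun_integral: "(LINT x|lborel. Bfun L x) = pi\<^sup>2 / 4 * ln (1 + (exp L)\<^sup>2) + C1 * pi + 8 * pi"
proof -
  have M: "exp L > 0" by simp
  have eq: "Bfun L = (\<lambda>x. pi\<^sup>2 / 4 * (if \<bar>x\<bar> \<le> exp L then \<bar>x\<bar> / (1 + x\<^sup>2) else 0)
     + C1 * (1 / (1 + x\<^sup>2)) + 8 * exp L / ((exp L)\<^sup>2 + x\<^sup>2))"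
    by (simp add: Bfun_def fun_eq_iff)
  note i = g1_integrable(1)[OF M] inv1_integrable inv2_integrable(1)[OF M]
  let ?a = "\<lambda>x::real. pi\<^sup>2 / 4 * (if \<bar>x\<bar> \<le> exp L then \<bar>x\<bar> / (1 + x\<^sup>2) else 0)"
  let ?b = "\<lambda>x::real. C1 * (1 / (1 + x\<^sup>2))"
  let ?c = "\<lambda>x::real. 8 * exp L / ((exp L)\<^sup>2 + x\<^sup>2)"
  have ia: "integrable lborel ?a" using i(1) by (rule integrable_mult_right)
  have ib: "integrable lborel ?b" using i(2) by (rule integrable_mult_right)
  show "integrable lborel (Bfun L)" unfolding eq by (rule Bochner_Integration.integrable_add[OF Bochner_Integration.integrable_add[OF ia ib] i(3)])
  have "(LINT x|lborel. ?a x + ?b x + ?c x) = (LINT x|lborel. ?a x + ?b x) + (LINT x|lborel. ?c x)"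
    by (rule Bochner_Integration.integral_add[OF Bochner_Integration.integrable_add[OF ia ib] i(3)])
  also have "(LINT x|lborel. ?a x + ?b x) = (LINT x|lborel. ?a x) + (LINT x|lborel. ?b x)"
    by (rule Bochner_Integration.integral_add[OF ia ib])
  also have "(LINT x|lborel. ?a x) = pi\<^sup>2 / 4 * ln (1 + (exp L)\<^sup>2)"
    using g1_integrable(2)[OF M] by (simp only: integral_mult_right_zero)
  also have "(LINT x|lborel. ?b x) = C1 * pi"
    using inv1_integral by (simp only: integral_mult_right_zero)
  also have "(LINT x|lborel. ?c x) = 8 * pi"
    using inv2_integrable(2)[OF M] .
  finally show "(LINT x|lborel. Bfun L x) = pi\<^sup>2 / 4 * ln (1 + (exp L)\<^sup>2) + C1 * pi + 8 * pi"
    unfolding eq .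
qed


lemma Qfun_integrable: assumes "L > 0" shows "integrable lborel (Qfun L)"
proof (rule Bochner_Integration.integrable_bound[OF Bfun_integrable(1)[OF assms]])
  show "Qfun L \<in> borel_measurable lborel" by measurable
  show "AE x in lborel. norm (Qfun L x) \<le> norm (Bfun L x)"
  proof (intro AE_I2)
    fix x
    have "\<bar>Qfun L x\<bar> = Qfun L x" "\<bar>Bfun L x\<bar> = Bfun L x"
      using Qfun_nonneg[of L x] Bfun_nonneg[of L x] by simp_all
    then show "norm (Qfun L x) \<le> norm (Bfun L x)" using Q_le_B[OF assms, of x] by simp
  qed
qed

lemma Qfun_integral_le: assumes "L > 0"
  shows "(LINT x|lborel. Qfun L x) \<le> pi\<^sup>2 / 4 * (2 * L + 1) + C1 * pi + 8 * pi"
proof -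
  have "(LINT x|lborel. Qfun L x) \<le> (LINT x|lborel. Bfun L x)"
    by (rule integral_mono[OF Qfun_integrable[OF assms] Bfun_integrable(1)[OF assms] Q_le_B[OF assms]])
  also have "\<dots> \<le> pi\<^sup>2 / 4 * (2 * L + 1) + C1 * pi + 8 * pi"
  proof -
    have "1 + (exp L)\<^sup>2 \<le> exp (2 * L + 1)"
    proof -
      have "1 \<le> exp L" using assms by simp
      then have "1 \<le> (exp L)\<^sup>2" by (rule one_le_power)
      then have "1 + (exp L)\<^sup>2 \<le> 2 * (exp L)\<^sup>2" by linarith
      also have "\<dots> \<le> exp 1 * (exp L)\<^sup>2"
        using exp_ge_add_one_self[of 1] by (intro mult_right_mono) auto
      also have "exp (2 * L + 1) = exp (2 * L) * exp 1" by (rule exp_add)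
      then have "exp 1 * (exp L)\<^sup>2 = exp (2 * L + 1)" by (simp add: exp_double)
      finally show ?thesis .
    qed
    then have "ln (1 + (exp L)\<^sup>2) \<le> ln (exp (2 * L + 1))"
      by (subst ln_le_cancel_iff) (auto simp: add_pos_nonneg)
    then have "ln (1 + (exp L)\<^sup>2) \<le> 2 * L + 1" by simp
    then have "pi\<^sup>2 / 4 * ln (1 + (exp L)\<^sup>2) \<le> pi\<^sup>2 / 4 * (2 * L + 1)"
      by (rule mult_left_mono) simp
    then show ?thesis unfolding Bfun_integrable(2)[OF assms] by linarith
  qed
  finally show ?thesis .
qed


definition WW :: "real \<Rightarrow> real \<Rightarrow> real" where
  "WW L y = (if \<bar>y\<bar> \<le> exp (- L) then 1 else if \<bar>y\<bar> < 1 then - ln \<bar>y\<bar> / L else 0)"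

lemma WW_measurable[measurable]: "WW L \<in> borel_measurable borel"
  unfolding WW_def[abs_def] by measurable

lemma WW_even: "WW L (- y) = WW L y"
  by (simp add: WW_def)

lemma WW_out: assumes "1 \<le> \<bar>y\<bar>" "L > 0" shows "WW L y = 0"
proof -
  have "exp (-L) < 1" using assms by simp
  then have "\<not> \<bar>y\<bar> \<le> exp (-L)" "\<not> \<bar>y\<bar> < 1" using assms by linarith+
  then show ?thesis by (simp add: WW_def)
qed

lemma WW_bounds: assumes "L > 0" shows "0 \<le> WW L y" "WW L y \<le> 1"
proof -
  have m: "exp (-L) < 1" using assms by simp
  have "0 \<le> WW L y \<and> WW L y \<le> 1"
  proof (cases "\<bar>y\<bar> \<le> exp (-L)")
    case True then show ?thesis by (simp add: WW_def)
  next
    case False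
    show ?thesis
    proof (cases "\<bar>y\<bar> < 1")
      case True
      have yp: "0 < \<bar>y\<bar>" using False exp_gt_zero[of "-L"] by linarith
      have "ln \<bar>y\<bar> < 0" using True yp by simp
      moreover have "ln (exp (-L)) < ln \<bar>y\<bar>" using False yp by (subst ln_less_cancel_iff) auto
      ultimately have "0 \<le> - ln \<bar>y\<bar> / L" "- ln \<bar>y\<bar> / L \<le> 1" using assms by (auto simp: field_simps)
      then show ?thesis using False True by (simp add: WW_def)
    next
      case False2: False
      then show ?thesis using False by (simp add: WW_def)
    qed
  qed
  then show "0 \<le> WW L y" "WW L y \<le> 1" by auto
qed

lemma WW_inner: "\<bar>y\<bar> \<le> exp (- L) \<Longrightarrow> WW L y = 1"
  by (simp add: WW_def)

lemma WW_pos_piece: assumes "L > 0" "exp (-L) \<le> y" "y \<le> 1"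
  shows "WW L y = - ln y / L"
proof -
  have yp: "0 < y" using assms(2) exp_gt_zero[of "-L"] by linarith
  consider "y = exp (-L)" | "exp (-L) < y" "y < 1" | "y = 1" using assms by linarith
  then show ?thesis
  proof cases
    case 1 then show ?thesis using assms by (simp add: WW_def)
  next
    case 2 then show ?thesis using yp by (simp add: WW_def)
  next
    case 3 then show ?thesis using assms by (simp add: WW_def)
  qed
qed

lemma DERIV_Si_chain: "(g has_real_derivative Db) (at x within s) \<Longrightarrow>
  ((\<lambda>x. Si (g x)) has_real_derivative sinc (g x) * Db) (at x within s)"
  by (rule DERIV_chain2[OF DERIV_Si])

lemma FTC_pos_piece:
  assumes L: "L > 0" and eta: "\<eta> \<noteq> 0" and ab: "0 < a" "a \<le> b"
  defines "F \<equiv> \<lambda>y. Si (\<eta> * y) / (L * \<eta>) - ln y * sin (\<eta> * y) / (L * \<eta>)"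
  shows "((\<lambda>y. - ln y / L * cos (\<eta> * y)) has_integral (F b - F a)) {a..b}"
proof (rule fundamental_theorem_of_calculus[OF ab(2)])
  fix y assume y: "y \<in> {a..b}"
  then have yp: "0 < y" using ab by auto
  have ds: "((\<lambda>y. sin (\<eta> * y)) has_real_derivative cos (\<eta> * y) * \<eta>) (at y)"
    by (rule DERIV_chain2[OF DERIV_sin DERIV_cmult_Id])
  have dS: "((\<lambda>y. Si (\<eta> * y)) has_real_derivative sinc (\<eta> * y) * \<eta>) (at y)"
    by (rule DERIV_Si_chain[OF DERIV_cmult_Id])
  have dp: "((\<lambda>y. ln y * sin (\<eta> * y)) has_real_derivative (1 / y) * sin (\<eta> * y) + cos (\<eta> * y) * \<eta> * ln y) (at y)"
    by (rule DERIV_mult[OF DERIV_ln_divide[OF yp] ds])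
  have dF: "(F has_real_derivative (sinc (\<eta> * y) * \<eta> / (L * \<eta>) - ((1 / y) * sin (\<eta> * y) + cos (\<eta> * y) * \<eta> * ln y) / (L * \<eta>))) (at y)"
    unfolding F_def by (rule DERIV_diff[OF DERIV_cdivide[OF dS] DERIV_cdivide[OF dp]])
  have ne: "\<eta> * y \<noteq> 0" using eta yp by simp
  have "sinc (\<eta> * y) * \<eta> / (L * \<eta>) - ((1 / y) * sin (\<eta> * y) + cos (\<eta> * y) * \<eta> * ln y) / (L * \<eta>)
        = - ln y / L * cos (\<eta> * y)"
    using ne eta yp L by (simp add: field_simps)
  then have "(F has_real_derivative (- ln y / L * cos (\<eta> * y))) (at y)" using dF by (simp only:)
  then show "(F has_vector_derivative (- ln y / L * cos (\<eta> * y))) (at y within {a..b})"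
    by (simp add: has_real_derivative_iff_has_vector_derivative[symmetric] has_field_derivative_at_within)
qed

lemma FTC_neg_piece:
  assumes L: "L > 0" and eta: "\<eta> \<noteq> 0" and ab: "a \<le> b" "b < 0"
  defines "F \<equiv> \<lambda>y. Si (\<eta> * y) / (L * \<eta>) - ln (- y) * sin (\<eta> * y) / (L * \<eta>)"
  shows "((\<lambda>y. - ln (- y) / L * cos (\<eta> * y)) has_integral (F b - F a)) {a..b}"
proof (rule fundamental_theorem_of_calculus[OF ab(1)])
  fix y assume y: "y \<in> {a..b}"
  then have yn: "y < 0" using ab by auto
  have ds: "((\<lambda>y. sin (\<eta> * y)) has_real_derivative cos (\<eta> * y) * \<eta>) (at y)"
    by (rule DERIV_chain2[OF DERIV_sin DERIV_cmult_Id])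
  have dS: "((\<lambda>y. Si (\<eta> * y)) has_real_derivative sinc (\<eta> * y) * \<eta>) (at y)"
    by (rule DERIV_Si_chain[OF DERIV_cmult_Id])
  have dl: "((\<lambda>y. ln (- y)) has_real_derivative (1 / (- y)) * (- 1)) (at y)"
    using yn by (intro DERIV_chain2[OF DERIV_ln_divide DERIV_minus[OF DERIV_ident]]) auto
  have dp: "((\<lambda>y. ln (- y) * sin (\<eta> * y)) has_real_derivative (1 / (- y)) * (- 1) * sin (\<eta> * y) + cos (\<eta> * y) * \<eta> * ln (- y)) (at y)"
    by (rule DERIV_mult[OF dl ds])
  have dF: "(F has_real_derivative (sinc (\<eta> * y) * \<eta> / (L * \<eta>) - ((1 / (- y)) * (- 1) * sin (\<eta> * y) + cos (\<eta> * y) * \<eta> * ln (- y)) / (L * \<eta>))) (at y)"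
    unfolding F_def by (rule DERIV_diff[OF DERIV_cdivide[OF dS] DERIV_cdivide[OF dp]])
  have ne: "\<eta> * y \<noteq> 0" using eta yn by simp
  have "sinc (\<eta> * y) * \<eta> / (L * \<eta>) - ((1 / (- y)) * (- 1) * sin (\<eta> * y) + cos (\<eta> * y) * \<eta> * ln (- y)) / (L * \<eta>)
        = - ln (- y) / L * cos (\<eta> * y)"
    using ne eta yn L by (simp add: field_simps)
  then have "(F has_real_derivative (- ln (- y) / L * cos (\<eta> * y))) (at y)" using dF by (simp only:)
  then show "(F has_vector_derivative (- ln (- y) / L * cos (\<eta> * y))) (at y within {a..b})"
    by (simp add: has_real_derivative_iff_has_vector_derivative[symmetric] has_field_derivative_at_within)
qed

lemma FTC_mid_piece:
  fixes a b \<eta> :: real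
  assumes eta: "\<eta> \<noteq> 0" and ab: "a \<le> b"
  shows "((\<lambda>y. cos (\<eta> * y)) has_integral (sin (\<eta> * b) / \<eta> - sin (\<eta> * a) / \<eta>)) {a..b}"
proof (rule fundamental_theorem_of_calculus[OF ab])
  fix y assume y: "y \<in> {a..b}"
  have ds: "((\<lambda>y. sin (\<eta> * y)) has_real_derivative cos (\<eta> * y) * \<eta>) (at y)"
    by (rule DERIV_chain2[OF DERIV_sin DERIV_cmult_Id])
  have "((\<lambda>y. sin (\<eta> * y) / \<eta>) has_real_derivative cos (\<eta> * y) * \<eta> / \<eta>) (at y)"
    by (rule DERIV_cdivide[OF ds])
  moreover have "cos (\<eta> * y) * \<eta> / \<eta> = cos (\<eta> * y)" using eta by simp
  ultimately have "((\<lambda>y. sin (\<eta> * y) / \<eta>) has_real_derivative cos (\<eta> * y)) (at y)" by (simp only:)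
  then show "((\<lambda>y. sin (\<eta> * y) / \<eta>) has_vector_derivative cos (\<eta> * y)) (at y within {a..b})"
    by (simp add: has_real_derivative_iff_has_vector_derivative[symmetric] has_field_derivative_at_within)
qed


lemma WW_cos_has_integral:
  fixes \<eta> :: real
  assumes L: "L > 0" and eta: "\<eta> \<noteq> 0"
  shows "((\<lambda>y. WW L y * cos (\<eta> * y)) has_integral 2 * (Si \<eta> - Si (exp (- L) * \<eta>)) / (L * \<eta>)) {-1..1}"
proof -
  define m where "m = exp (- L)"
  have m: "0 < m" "m < 1" using L by (auto simp: m_def)
  have lnm: "ln m = - L" by (simp add: m_def)
  define F1 where "F1 = (\<lambda>y. Si (\<eta> * y) / (L * \<eta>) - ln y * sin (\<eta> * y) / (L * \<eta>))"
  define F2 where "F2 = (\<lambda>y. Si (\<eta> * y) / (L * \<eta>) - ln (- y) * sin (\<eta> * y) / (L * \<eta>))"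
  have P3: "((\<lambda>y. WW L y * cos (\<eta> * y)) has_integral (F1 1 - F1 m)) {m..1}"
    unfolding F1_def
  proof (rule has_integral_eq[OF _ FTC_pos_piece[OF L eta m(1)]])
    fix y assume "y \<in> {m..1}"
    then show "- ln y / L * cos (\<eta> * y) = WW L y * cos (\<eta> * y)"
      using WW_pos_piece[OF L, of y] by (simp add: m_def)
  qed (use m in \<open>auto simp: F1_def\<close>)
  have P1: "((\<lambda>y. WW L y * cos (\<eta> * y)) has_integral (F2 (-m) - F2 (-1))) {-1..-m}"
    unfolding F2_def
  proof (rule has_integral_eq[OF _ FTC_neg_piece[OF L eta]])
    fix y assume y: "y \<in> {-1..-m}"
    then have "WW L (- y) = - ln (- y) / L" using WW_pos_piece[OF L, of "-y"] by (simp add: m_def)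
    then show "- ln (- y) / L * cos (\<eta> * y) = WW L y * cos (\<eta> * y)"
      by (simp add: WW_even)
  qed (use m in \<open>auto simp: F2_def\<close>)
  have P2: "((\<lambda>y. WW L y * cos (\<eta> * y)) has_integral (sin (\<eta> * m) / \<eta> - sin (\<eta> * (-m)) / \<eta>)) {-m..m}"
  proof (rule has_integral_eq[OF _ FTC_mid_piece[OF eta]])
    fix y assume y: "y \<in> {-m..m}"
    then have "WW L y = 1" by (intro WW_inner) (auto simp: m_def)
    then show "cos (\<eta> * y) = WW L y * cos (\<eta> * y)" by simp
  qed (use m in auto)
  have P12: "((\<lambda>y. WW L y * cos (\<eta> * y)) has_integral
      (F2 (-m) - F2 (-1)) + (sin (\<eta> * m) / \<eta> - sin (\<eta> * (-m)) / \<eta>)) {-1..m}"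
    by (rule has_integral_combine[OF _ _ P1 P2]) (use m in auto)
  have P: "((\<lambda>y. WW L y * cos (\<eta> * y)) has_integral
      ((F2 (-m) - F2 (-1)) + (sin (\<eta> * m) / \<eta> - sin (\<eta> * (-m)) / \<eta>)) + (F1 1 - F1 m)) {-1..1}"
    by (rule has_integral_combine[OF _ _ P12 P3]) (use m in auto)
  have "((F2 (-m) - F2 (-1)) + (sin (\<eta> * m) / \<eta> - sin (\<eta> * (-m)) / \<eta>)) + (F1 1 - F1 m)
      = 2 * (Si \<eta> - Si (\<eta> * m)) / (L * \<eta>)"
  proof -
    have a: "F2 (-m) = - Si (\<eta> * m) / (L * \<eta>) - L * sin (\<eta> * m) / (L * \<eta>)"
      unfolding F2_def using lnm by (simp add: Si_odd)
    have b: "F2 (-1) = - Si \<eta> / (L * \<eta>)" unfolding F2_def by (simp add: Si_odd)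
    have c: "F1 1 = Si \<eta> / (L * \<eta>)" unfolding F1_def by simp
    have d: "F1 m = Si (\<eta> * m) / (L * \<eta>) + L * sin (\<eta> * m) / (L * \<eta>)"
      unfolding F1_def using lnm by simp
    have e: "L * sin (\<eta> * m) / (L * \<eta>) = sin (\<eta> * m) / \<eta>" using L by simp
    show ?thesis unfolding a b c d e using L eta by (simp add: field_simps)
  qed
  then show ?thesis using P by (simp add: m_def mult.commute)
qed

lemma indicator_integrable_11: "integrable lborel (\<lambda>x::real. indicator {-1..1} x *\<^sub>R (1::real))"
  using borel_integrable_atLeastAtMost'[of "-1" 1 "\<lambda>_. 1::real"] unfolding set_integrable_def by simp

lemma WW_norm_le: assumes "L > 0" shows "\<bar>WW L y\<bar> \<le> indicator {-1..1} y *\<^sub>R (1::real)"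
proof (cases "y \<in> {-1..1}")
  case True then show ?thesis using WW_bounds[OF assms, of y] by simp
next
  case False
  then have "1 \<le> \<bar>y\<bar>" by auto
  then show ?thesis using WW_out[OF _ assms] False by simp
qed

lemma WW_trig_integrable:
  fixes g :: "real \<Rightarrow> real"
  assumes L: "L > 0" and g: "g \<in> borel_measurable borel" "\<And>y. \<bar>g y\<bar> \<le> 1"
  shows "integrable lborel (\<lambda>y. WW L y * g y)"
proof (rule Bochner_Integration.integrable_bound[OF indicator_integrable_11])
  show "(\<lambda>y. WW L y * g y) \<in> borel_measurable lborel" using g(1) by measurable
  show "AE x in lborel. norm (WW L x * g x) \<le> norm (indicator {-1..1} x *\<^sub>R (1::real))"
  proof (intro AE_I2)
    fix x
    have "\<bar>WW L x * g x\<bar> \<le> \<bar>WW L x\<bar> * 1" unfolding abs_mult using g(2)[of x] by (intro mult_left_mono) auto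
    also have "\<dots> \<le> indicator {-1..1} x *\<^sub>R (1::real)" using WW_norm_le[OF L, of x] by simp
    finally show "norm (WW L x * g x) \<le> norm (indicator {-1..1} x *\<^sub>R (1::real))" by simp
  qed
qed

lemma WW_cos_integral:
  fixes \<eta> :: real
  assumes L: "L > 0" and eta: "\<eta> \<noteq> 0"
  shows "(LINT y|lborel. WW L y * cos (\<eta> * y)) = 2 * (Si \<eta> - Si (exp (- L) * \<eta>)) / (L * \<eta>)"
proof -
  have int: "integrable lborel (\<lambda>y. WW L y * cos (\<eta> * y))"
    using L by (intro WW_trig_integrable) auto
  have "((\<lambda>y. WW L y * cos (\<eta> * y)) has_integral 2 * (Si \<eta> - Si (exp (- L) * \<eta>)) / (L * \<eta>)) UNIV"
  proof -
    have eq: "(\<lambda>y. if y \<in> {-1..1} then WW L y * cos (\<eta> * y) else 0) = (\<lambda>y. WW L y * cos (\<eta> * y))"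
    proof
      fix y show "(if y \<in> {-1..1} then WW L y * cos (\<eta> * y) else 0) = WW L y * cos (\<eta> * y)"
        using WW_out[OF _ L, of y] by auto
    qed
    show ?thesis using WW_cos_has_integral[OF L eta]
      by (subst eq[symmetric]) (simp only: has_integral_restrict_UNIV)
  qed
  moreover have "((\<lambda>y. WW L y * cos (\<eta> * y)) has_integral (LINT y|lborel. WW L y * cos (\<eta> * y))) UNIV"
    by (rule has_integral_integral_lborel[OF int])
  ultimately show ?thesis by (rule has_integral_unique[symmetric])
qed

lemma WW_sin_integral:
  fixes \<eta> :: real
  shows "(LINT y|lborel. WW L y * sin (\<eta> * y)) = 0"
proof -
  have "(LINT y|lborel. WW L y * sin (\<eta> * y)) = \<bar>-1\<bar> *\<^sub>R (LINT y|lborel. WW L (0 + -1 * y) * sin (\<eta> * (0 + -1 * y)))"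
    by (rule lborel_integral_real_affine) simp
  also have "\<dots> = - (LINT y|lborel. WW L y * sin (\<eta> * y))"
    by (simp add: WW_even)
  finally show ?thesis by simp
qed

lemma WW_fourier:
  fixes \<eta> :: real
  assumes L: "L > 0" and eta: "\<eta> \<noteq> 0"
  shows "(LINT y|lborel. complex_of_real (WW L y) * cis (- (\<eta> * y)))
       = complex_of_real (2 * (Si \<eta> - Si (exp (- L) * \<eta>)) / (L * \<eta>))"
proof -
  let ?f = "\<lambda>y. complex_of_real (WW L y) * cis (- (\<eta> * y))"
  have int: "integrable lborel ?f"
  proof (rule Bochner_Integration.integrable_bound[OF indicator_integrable_11])
    have "(\<lambda>x. cis (- (\<eta> * x))) \<in> borel_measurable borel"
      by (intro borel_measurable_continuous_onI continuous_intros)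
    then show "?f \<in> borel_measurable lborel" by measurable
    show "AE x in lborel. norm (?f x) \<le> norm (indicator {-1..1} x *\<^sub>R (1::real))"
    proof (intro AE_I2)
      fix x
      have "norm (?f x) = \<bar>WW L x\<bar>" by (simp add: norm_mult)
      then show "norm (?f x) \<le> norm (indicator {-1..1} x *\<^sub>R (1::real))"
        using WW_norm_le[OF L, of x] by simp
    qed
  qed
  have re: "Re (integral\<^sup>L lborel ?f) = 2 * (Si \<eta> - Si (exp (- L) * \<eta>)) / (L * \<eta>)"
    using integral_Re[OF int, symmetric] WW_cos_integral[OF L eta] by simp
  have im: "Im (integral\<^sup>L lborel ?f) = 0"
    using integral_Im[OF int, symmetric] WW_sin_integral[of L \<eta>] by simp
  show ?thesis using re im by (simp add: complex_eq_iff)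
qed


definition wfun :: "real \<Rightarrow> real \<Rightarrow> real \<Rightarrow> real \<Rightarrow> real" where
  "wfun L a b x = WW L ((x - (a + b) / 2) / ((b - a) / 2))"

lemma Re_mult_cnj: "Re (z * cnj z) = (cmod z)\<^sup>2"
  using cmod_power2[of z] by (simp add: power2_eq_square)

lemma fourier_wfun:
  assumes L: "L > 0" and ab: "a < b" and xi: "\<xi> \<noteq> 0"
  defines "c \<equiv> (a + b) / 2" and "h \<equiv> (b - a) / 2"
  shows "fourier (wfun L a b) \<xi> = complex_of_real h * cis (- (c * \<xi>))
          * complex_of_real (2 * Dfun L (h * \<xi>) / (L * (h * \<xi>))) / complex_of_real (sqrt (2 * pi))"
proof -
  have h: "h > 0" using ab by (simp add: h_def)
  have "(LINT x|lborel. complex_of_real (wfun L a b x) * cis (- (x * \<xi>)))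
     = \<bar>h\<bar> *\<^sub>R (LINT y|lborel. complex_of_real (wfun L a b (c + h * y)) * cis (- ((c + h * y) * \<xi>)))"
    using h by (intro lborel_integral_real_affine) simp
  also have "(\<lambda>y. complex_of_real (wfun L a b (c + h * y)) * cis (- ((c + h * y) * \<xi>)))
      = (\<lambda>y. cis (- (c * \<xi>)) * (complex_of_real (WW L y) * cis (- ((h * \<xi>) * y))))"
  proof
    fix y
    have "wfun L a b (c + h * y) = WW L y" using h by (simp add: wfun_def c_def h_def)
    moreover have "cis (- ((c + h * y) * \<xi>)) = cis (- (c * \<xi>)) * cis (- ((h * \<xi>) * y))"
      by (simp add: cis_mult algebra_simps)
    ultimately show "complex_of_real (wfun L a b (c + h * y)) * cis (- ((c + h * y) * \<xi>))
      = cis (- (c * \<xi>)) * (complex_of_real (WW L y) * cis (- ((h * \<xi>) * y)))" by simp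
  qed
  also have "(LINT y|lborel. cis (- (c * \<xi>)) * (complex_of_real (WW L y) * cis (- ((h * \<xi>) * y))))
     = cis (- (c * \<xi>)) * (LINT y|lborel. complex_of_real (WW L y) * cis (- ((h * \<xi>) * y)))"
    by (rule integral_mult_right_zero)
  also have "(LINT y|lborel. complex_of_real (WW L y) * cis (- ((h * \<xi>) * y)))
     = complex_of_real (2 * (Si (h * \<xi>) - Si (exp (- L) * (h * \<xi>))) / (L * (h * \<xi>)))"
    using h xi by (intro WW_fourier L) simp
  finally have "(LINT x|lborel. complex_of_real (wfun L a b x) * cis (- (x * \<xi>)))
     = complex_of_real h * cis (- (c * \<xi>)) * complex_of_real (2 * Dfun L (h * \<xi>) / (L * (h * \<xi>)))"
    using h by (simp add: Dfun_def scaleR_conv_of_real)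
  then show ?thesis by (simp add: fourier_def)
qed

lemma Hinner_integrand_wfun:
  assumes L: "L > 0" and ab: "a < b"
  defines "h \<equiv> (b - a) / 2"
  shows "\<bar>\<xi>\<bar> * Re (fourier (wfun L a b) \<xi> * cnj (fourier (wfun L a b) \<xi>))
       = (2 * h / (pi * L\<^sup>2)) * Qfun L (h * \<xi>)"
proof (cases "\<xi> = 0")
  case True then show ?thesis by (simp add: Qfun_def)
next
  case False
  have h: "h > 0" using ab by (simp add: h_def)
  let ?c = "(a + b) / 2"
  have "cmod (fourier (wfun L a b) \<xi>) = h * \<bar>2 * Dfun L (h * \<xi>) / (L * (h * \<xi>))\<bar> / sqrt (2 * pi)"
    unfolding fourier_wfun[OF L ab False] h_def[symmetric]
    using h L False by (simp add: norm_mult norm_divide abs_mult field_simps)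
  then have "(cmod (fourier (wfun L a b) \<xi>))\<^sup>2 = h\<^sup>2 * (2 * Dfun L (h * \<xi>) / (L * (h * \<xi>)))\<^sup>2 / (2 * pi)"
    by (simp add: power_divide power_mult_distrib)
  then have "\<bar>\<xi>\<bar> * (cmod (fourier (wfun L a b) \<xi>))\<^sup>2 = (2 * h / (pi * L\<^sup>2)) * Qfun L (h * \<xi>)"
    using h False L unfolding Qfun_def
    by (simp add: field_simps power2_eq_square abs_mult)
  then show ?thesis unfolding Re_mult_cnj .
qed


definition Kc :: real where "Kc = pi / 2 + 2 * C1 + 16"

lemma Hinner_wfun:
  assumes L: "L > 0" and ab: "a < b"
  shows "integrable lborel (\<lambda>\<xi>. \<bar>\<xi>\<bar> * Re (fourier (wfun L a b) \<xi> * cnj (fourier (wfun L a b) \<xi>)))"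
    and "Hinner (wfun L a b) (wfun L a b) = (2 / (pi * L\<^sup>2)) * (LINT x|lborel. Qfun L x)"
proof -
  define h where "h = (b - a) / 2"
  have h: "h > 0" using ab by (simp add: h_def)
  have eq: "(\<lambda>\<xi>. \<bar>\<xi>\<bar> * Re (fourier (wfun L a b) \<xi> * cnj (fourier (wfun L a b) \<xi>)))
       = (\<lambda>\<xi>. (2 * h / (pi * L\<^sup>2)) * Qfun L (0 + h * \<xi>))"
    using Hinner_integrand_wfun[OF L ab] by (simp add: h_def)
  have iQ: "integrable lborel (\<lambda>\<xi>. Qfun L (0 + h * \<xi>))"
    using lborel_integrable_real_affine_iff[of h "Qfun L" 0] h Qfun_integrable[OF L] by simp
  show "integrable lborel (\<lambda>\<xi>. \<bar>\<xi>\<bar> * Re (fourier (wfun L a b) \<xi> * cnj (fourier (wfun L a b) \<xi>)))"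
    unfolding eq by (rule integrable_mult_right[OF iQ])
  have aff: "(LINT x|lborel. Qfun L x) = \<bar>h\<bar> *\<^sub>R (LINT \<xi>|lborel. Qfun L (0 + h * \<xi>))"
    using h by (intro lborel_integral_real_affine) simp
  have "Hinner (wfun L a b) (wfun L a b) = (2 * h / (pi * L\<^sup>2)) * (LINT \<xi>|lborel. Qfun L (0 + h * \<xi>))"
    unfolding Hinner_def eq by (rule integral_mult_right_zero)
  also have "\<dots> = (2 / (pi * L\<^sup>2)) * (LINT x|lborel. Qfun L x)"
    using aff h by simp
  finally show "Hinner (wfun L a b) (wfun L a b) = (2 / (pi * L\<^sup>2)) * (LINT x|lborel. Qfun L x)" .
qed

lemma Hinner_wfun_le:
  assumes L: "L > 0" and ab: "a < b"
  shows "Hinner (wfun L a b) (wfun L a b) \<le> pi / L + Kc / L\<^sup>2"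
proof -
  have "Hinner (wfun L a b) (wfun L a b) \<le> (2 / (pi * L\<^sup>2)) * (pi\<^sup>2 / 4 * (2 * L + 1) + C1 * pi + 8 * pi)"
    unfolding Hinner_wfun(2)[OF L ab] using Qfun_integral_le[OF L]
    by (intro mult_left_mono) auto
  also have "\<dots> = pi / L + Kc / L\<^sup>2"
    using L by (simp add: Kc_def field_simps power2_eq_square)
  finally show ?thesis .
qed

lemma wfun_bounds: assumes "L > 0" shows "0 \<le> wfun L a b x" "wfun L a b x \<le> 1"
  using WW_bounds[OF assms] by (simp_all add: wfun_def)

lemma wfun_out: assumes L: "L > 0" and ab: "a < b" and x: "x \<notin> {a<..<b}"
  shows "wfun L a b x = 0"
proof -
  define h where "h = (b - a) / 2"
  define c where "c = (a + b) / 2"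
  have h: "h > 0" using ab by (simp add: h_def)
  have "h \<le> \<bar>x - c\<bar>"
  proof (cases "x \<le> a")
    case True then have "x - c \<le> - h" using ab unfolding h_def c_def by (simp add: field_simps)
    then show ?thesis by linarith
  next
    case False then have "b \<le> x" using x by auto
    then have "h \<le> x - c" unfolding h_def c_def by (simp add: field_simps)
    then show ?thesis by linarith
  qed
  then have "1 \<le> \<bar>x - c\<bar> / h" using h by (simp add: le_divide_eq)
  then have "1 \<le> \<bar>(x - c) / h\<bar>" using h by (simp add: abs_divide)
  then show ?thesis unfolding wfun_def c_def[symmetric] h_def[symmetric] by (rule WW_out[OF _ L])
qed

lemma wfun_inner: assumes ab: "a < b" and x: "\<bar>x - (a + b) / 2\<bar> \<le> exp (- L) * ((b - a) / 2)"
  shows "wfun L a b x = 1"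
proof -
  define h where "h = (b - a) / 2"
  define c where "c = (a + b) / 2"
  have h: "h > 0" using ab by (simp add: h_def)
  have "\<bar>x - c\<bar> / h \<le> exp (- L)" using h x by (simp add: divide_le_eq h_def c_def)
  then have "\<bar>(x - c) / h\<bar> \<le> exp (- L)" using h by (simp add: abs_divide)
  then show ?thesis unfolding wfun_def c_def[symmetric] h_def[symmetric] by (rule WW_inner)
qed

lemma wfun_measurable[measurable]: "wfun L a b \<in> borel_measurable borel"
  unfolding wfun_def[abs_def] by measurable


lemma fourier_scale: "fourier (\<lambda>x. s * u x) \<xi> = complex_of_real s * fourier u \<xi>"
proof -
  have "(LINT x|lborel. complex_of_real (s * u x) * cis (- (x * \<xi>)))
      = (LINT x|lborel. complex_of_real s * (complex_of_real (u x) * cis (- (x * \<xi>))))"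
    by (simp add: mult.assoc)
  also have "\<dots> = complex_of_real s * (LINT x|lborel. complex_of_real (u x) * cis (- (x * \<xi>)))"
    by (rule integral_mult_right_zero)
  finally show ?thesis unfolding fourier_def by simp
qed

lemma Hinner_integrand_scale:
  "\<bar>\<xi>\<bar> * Re (fourier (\<lambda>x. s * u x) \<xi> * cnj (fourier (\<lambda>x. s * u x) \<xi>))
   = s\<^sup>2 * (\<bar>\<xi>\<bar> * Re (fourier u \<xi> * cnj (fourier u \<xi>)))"
  unfolding fourier_scale Re_mult_cnj by (simp add: norm_mult power_mult_distrib)

lemma Hinner_scale: "Hinner (\<lambda>x. s * u x) (\<lambda>x. s * u x) = s\<^sup>2 * Hinner u u"
  unfolding Hinner_def Hinner_integrand_scale by (rule integral_mult_right_zero)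

lemma Hinner_nonneg: "0 \<le> Hinner u u"
  unfolding Hinner_def Re_mult_cnj by (intro Bochner_Integration.integral_nonneg) auto

lemma Hnorm_sq: "(Hnorm u)\<^sup>2 = Hinner u u"
  unfolding Hnorm_def using Hinner_nonneg by simp

lemma Hspace_scale: assumes "u \<in> Hspace a b" shows "(\<lambda>x. s * u x) \<in> Hspace a b"
proof -
  have m: "u \<in> borel_measurable lborel" and i1: "integrable lborel (\<lambda>x. (u x)\<^sup>2)"
    and i2: "integrable lborel (\<lambda>\<xi>. \<bar>\<xi>\<bar> * (cmod (fourier u \<xi>))\<^sup>2)"
    and ae: "AE x in lborel. x \<notin> {a<..<b} \<longrightarrow> u x = 0"
    using assms by (auto simp: Hspace_def)
  have "(\<lambda>x. s * u x) \<in> borel_measurable lborel" using m by measurable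
  moreover have "integrable lborel (\<lambda>x. (s * u x)\<^sup>2)"
    using integrable_mult_right[OF i1, of "s\<^sup>2"] by (simp add: power_mult_distrib)
  moreover have "integrable lborel (\<lambda>\<xi>. \<bar>\<xi>\<bar> * (cmod (fourier (\<lambda>x. s * u x) \<xi>))\<^sup>2)"
    using integrable_mult_right[OF i2, of "s\<^sup>2"]
    by (simp add: fourier_scale norm_mult power_mult_distrib mult.left_commute)
  moreover have "AE x in lborel. x \<notin> {a<..<b} \<longrightarrow> s * u x = 0"
    using ae by eventually_elim auto
  ultimately show ?thesis by (simp add: Hspace_def)
qed

lemma wfun_Hspace: assumes L: "L > 0" and ab: "a < b" shows "wfun L a b \<in> Hspace a b"
proof -
  have m: "wfun L a b \<in> borel_measurable lborel" by measurable
  have ind: "integrable lborel (\<lambda>x::real. indicator {a..b} x *\<^sub>R (1::real))"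
    using borel_integrable_atLeastAtMost'[of a b "\<lambda>_. 1::real"] unfolding set_integrable_def by simp
  have i1: "integrable lborel (\<lambda>x. (wfun L a b x)\<^sup>2)"
  proof (rule Bochner_Integration.integrable_bound[OF ind])
    show "(\<lambda>x. (wfun L a b x)\<^sup>2) \<in> borel_measurable lborel" by measurable
    show "AE x in lborel. norm ((wfun L a b x)\<^sup>2) \<le> norm (indicator {a..b} x *\<^sub>R (1::real))"
    proof (intro AE_I2)
      fix x
      show "norm ((wfun L a b x)\<^sup>2) \<le> norm (indicator {a..b} x *\<^sub>R (1::real))"
      proof (cases "x \<in> {a..b}")
        case True
        have "(wfun L a b x)\<^sup>2 \<le> 1"
          using wfun_bounds[OF L, of a b x] by (simp add: power_le_one)
        then show ?thesis using True by simp
      next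
        case False
        then have "x \<notin> {a<..<b}" by auto
        then show ?thesis using wfun_out[OF L ab] False by simp
      qed
    qed
  qed
  have i2: "integrable lborel (\<lambda>\<xi>. \<bar>\<xi>\<bar> * (cmod (fourier (wfun L a b) \<xi>))\<^sup>2)"
    using Hinner_wfun(1)[OF L ab] unfolding Re_mult_cnj .
  have ae: "AE x in lborel. x \<notin> {a<..<b} \<longrightarrow> wfun L a b x = 0"
    using wfun_out[OF L ab] by (intro AE_I2) auto
  show ?thesis using m i1 i2 ae by (simp add: Hspace_def)
qed

lemma wfun_not_Hzero: assumes L: "L > 0" and ab: "a < b" shows "\<not> Hzero (wfun L a b)"
proof
  assume "Hzero (wfun L a b)"
  then have ae: "AE x in lborel. wfun L a b x = 0" by (simp add: Hzero_def)
  define r where "r = exp (- L) * ((b - a) / 2)"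
  define S where "S = {(a + b) / 2 - r .. (a + b) / 2 + r}"
  have r: "r > 0" using ab by (simp add: r_def)
  have "AE x in lborel. x \<notin> S"
    using ae
  proof eventually_elim
    case (elim x)
    show "x \<notin> S"
    proof
      assume "x \<in> S"
      then have "\<bar>x - (a + b) / 2\<bar> \<le> r" by (auto simp: S_def abs_le_iff)
      then have "wfun L a b x = 1" using wfun_inner[OF ab] by (simp add: r_def)
      with elim show False by simp
    qed
  qed
  then have "emeasure lborel {x \<in> space lborel. \<not> x \<notin> S} = 0"
    by (subst AE_iff_measurable[symmetric, where P="\<lambda>x. x \<notin> S"]) (auto simp: S_def)
  moreover have "{x \<in> space lborel. \<not> x \<notin> S} = S" by auto
  ultimately have "emeasure lborel S = 0" by simp
  moreover have "emeasure lborel S = ennreal (2 * r)" using r by (simp add: S_def)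
  ultimately show False using r by simp
qed

lemma Iint_pos:
  assumes u: "u \<in> Hspace a b" and nz: "\<not> Hzero u"
  shows "0 < (LINT x:{a<..<b}|lborel. (u x)\<^sup>2)"
proof -
  have i1: "integrable lborel (\<lambda>x. (u x)\<^sup>2)" and ae: "AE x in lborel. x \<notin> {a<..<b} \<longrightarrow> u x = 0"
    using u by (auto simp: Hspace_def)
  have ii: "integrable lborel (\<lambda>x. indicator {a<..<b} x *\<^sub>R (u x)\<^sup>2)"
    by (rule integrable_mult_indicator[OF _ i1]) simp
  have nn: "0 \<le> (LINT x:{a<..<b}|lborel. (u x)\<^sup>2)"
    unfolding set_lebesgue_integral_def by (intro Bochner_Integration.integral_nonneg) auto
  have "(LINT x:{a<..<b}|lborel. (u x)\<^sup>2) \<noteq> 0"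
  proof
    assume "(LINT x:{a<..<b}|lborel. (u x)\<^sup>2) = 0"
    then have "AE x in lborel. indicator {a<..<b} x *\<^sub>R (u x)\<^sup>2 = 0"
      unfolding set_lebesgue_integral_def
      by (subst integral_nonneg_eq_0_iff_AE[OF ii, symmetric]) auto
    then have "AE x in lborel. u x = 0"
      using ae by eventually_elim (auto simp: indicator_def split: if_splits)
    then show False using nz by (simp add: Hzero_def)
  qed
  then show ?thesis using nn by linarith
qed

lemma lambda1_le:
  assumes u: "u \<in> Hspace a b" and nz: "\<not> Hzero u"
  shows "lambda1 a b \<le> (Hnorm u)\<^sup>2 / (LINT x:{a<..<b}|lborel. (u x)\<^sup>2)"
  unfolding lambda1_def
proof (rule cInf_lower)
  show "(Hnorm u)\<^sup>2 / (LINT x:{a<..<b}|lborel. (u x)\<^sup>2) \<in> {(Hnorm u)\<^sup>2 / (LINT x:{a<..<b}|lborel. (u x)\<^sup>2) | u. u \<in> Hspace a b \<and> \<not> Hzero u}"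
    using u nz by blast
  show "bdd_below {(Hnorm u)\<^sup>2 / (LINT x:{a<..<b}|lborel. (u x)\<^sup>2) | u. u \<in> Hspace a b \<and> \<not> Hzero u}"
  proof (rule bdd_belowI[of _ 0])
    fix r assume "r \<in> {(Hnorm u)\<^sup>2 / (LINT x:{a<..<b}|lborel. (u x)\<^sup>2) | u. u \<in> Hspace a b \<and> \<not> Hzero u}"
    then obtain v where "r = (Hnorm v)\<^sup>2 / (LINT x:{a<..<b}|lborel. (v x)\<^sup>2)" by blast
    moreover have "0 \<le> (LINT x:{a<..<b}|lborel. (v x)\<^sup>2)"
      unfolding set_lebesgue_integral_def by (intro Bochner_Integration.integral_nonneg) auto
    ultimately show "0 \<le> r" by simp
  qed
qed

lemma lam_lt_Hinner:
  assumes lam: "0 < lam" "lam < lambda1 a b" and u: "u \<in> Hspace a b" and nz: "\<not> Hzero u"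
  shows "lam * (LINT x:{a<..<b}|lborel. (u x)\<^sup>2) < Hinner u u"
proof -
  have I: "0 < (LINT x:{a<..<b}|lborel. (u x)\<^sup>2)" by (rule Iint_pos[OF u nz])
  have "lam < Hinner u u / (LINT x:{a<..<b}|lborel. (u x)\<^sup>2)"
    using lambda1_le[OF u nz] lam(2) unfolding Hnorm_sq by linarith
  then show ?thesis using I by (simp add: less_divide_eq)
qed

lemma exp_half_ineq: "exp s - 1 \<le> s * exp (s::real)"
proof -
  have "1 + (- s) \<le> exp (- s)" by (rule exp_ge_add_one_self)
  then have "(1 - s) * exp s \<le> exp (- s) * exp s" by (intro mult_right_mono) auto
  then show ?thesis by (simp add: exp_minus field_simps)
qed

lemma Jfun_nonneg_Nehari:
  assumes lam: "0 < lam" "lam < lambda1 a b" and u: "u \<in> Nehari a b lam"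
  shows "0 \<le> Jfun a b lam u"
proof -
  have uH: "u \<in> Hspace a b" and nz: "\<not> Hzero u" and J: "Jderiv a b lam u u = 0"
    using u by (auto simp: Nehari_def)
  let ?P = "LINT x:{a<..<b}|lborel. u x * u x * exp ((1/2) * (u x)\<^sup>2)"
  let ?E = "LINT x:{a<..<b}|lborel. exp ((1/2) * (u x)\<^sup>2) - 1"
  have HP: "Hinner u u = lam * ?P" using J by (simp add: Jderiv_def)
  have I: "0 < (LINT x:{a<..<b}|lborel. (u x)\<^sup>2)" by (rule Iint_pos[OF uH nz])
  have Hpos: "0 < Hinner u u"
    using lam_lt_Hinner[OF lam uH nz] I lam(1) by (smt (verit) mult_pos_pos)
  then have Ppos: "0 < ?P" using HP lam(1) by (simp add: zero_less_mult_iff)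
  have "?E \<le> ?P / 2"
  proof (cases "set_integrable lborel {a<..<b} (\<lambda>x. exp ((1/2) * (u x)\<^sup>2) - 1)")
    case False
    then have "?E = 0" unfolding set_lebesgue_integral_def set_integrable_def
      by (rule not_integrable_integral_eq)
    then show ?thesis using Ppos by simp
  next
    case True
    have Pint: "set_integrable lborel {a<..<b} (\<lambda>x. u x * u x * exp ((1/2) * (u x)\<^sup>2))"
    proof (rule ccontr)
      assume "\<not> ?thesis"
      then have "?P = 0" unfolding set_lebesgue_integral_def set_integrable_def
        by (rule not_integrable_integral_eq)
      then show False using Ppos by simp
    qed
    have "?E \<le> (LINT x:{a<..<b}|lborel. (1/2) * (u x * u x * exp ((1/2) * (u x)\<^sup>2)))"
    proof (rule set_integral_mono[OF True])
      show "set_integrable lborel {a<..<b} (\<lambda>x. (1/2) * (u x * u x * exp ((1/2) * (u x)\<^sup>2)))"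
        using Pint by (rule set_integrable_mult_right)
      fix x
      show "exp ((1/2) * (u x)\<^sup>2) - 1 \<le> (1/2) * (u x * u x * exp ((1/2) * (u x)\<^sup>2))"
        using exp_half_ineq[of "(1/2) * (u x)\<^sup>2"] by (simp add: power2_eq_square mult.assoc)
    qed
    also have "\<dots> = ?P / 2"
      by (simp add: set_integral_mult_right)
    finally show ?thesis .
  qed
  then have "lam * ?E \<le> lam * (?P / 2)" using lam(1) by (intro mult_left_mono) auto
  then show ?thesis unfolding Jfun_def Hnorm_sq HP by simp
qed


lemma exp_tangent: "exp x0 * (1 + (x - x0)) \<le> exp (x::real)"
proof -
  have "1 + (x - x0) \<le> exp (x - x0)" by (rule exp_ge_add_one_self)
  then have "exp x0 * (1 + (x - x0)) \<le> exp x0 * exp (x - x0)" by (intro mult_left_mono) auto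
  also have "\<dots> = exp x" by (simp add: exp_diff)
  finally show ?thesis .
qed

lemma final_ineq:
  fixes A K L P t :: real
  assumes A: "A > 0" and K: "K \<ge> 0"
  defines "c0 \<equiv> (K + 1) / pi"
  assumes L1: "L \<ge> 1" and Lc: "L > c0" and LA: "L \<ge> (pi + K) * exp c0 / A" and LE: "A * L < exp L"
  and P: "0 < P" "P \<le> (pi + K / L) / L" and t: "0 \<le> t"
  shows "t * P / 2 - A * exp (- L) * (exp (t / 2) - 1) < pi"
proof -
  define \<kappa> where "\<kappa> = pi + K / L"
  have Lp: "L > 0" using L1 by simp
  have kpos: "\<kappa> > 0" unfolding \<kappa>_def using K Lp pi_gt_zero by (simp add: add_pos_nonneg)
  have kle: "\<kappa> \<le> pi + K" unfolding \<kappa>_def using K L1 by (simp add: divide_le_eq_1 divide_le_eq mult_le_cancel_left1 mult_right_mono[of 1 L K])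
  define y where "y = t * P / 2"
  have y0: "0 \<le> y" using t P by (simp add: y_def)
  have "P * L \<le> \<kappa>" using P(2) Lp by (simp add: \<kappa>_def le_divide_eq)
  then have "(t / 2) * (P * L) \<le> (t / 2) * \<kappa>" using t by (intro mult_left_mono) auto
  moreover have "y * L = (t / 2) * (P * L)" by (simp add: y_def)
  ultimately have "y * L \<le> (t / 2) * \<kappa>" by linarith
  then have tl: "y * L / \<kappa> \<le> t / 2" using kpos by (simp add: divide_le_eq)
  have "exp (y * L / \<kappa>) \<le> exp (t / 2)" using tl by simp
  then have "A * exp (- L) * (exp (y * L / \<kappa>) - 1) \<le> A * exp (- L) * (exp (t / 2) - 1)"
    using A by (intro mult_left_mono) auto
  moreover have "A * exp (y * L / \<kappa> - L) = A * (exp (y * L / \<kappa>) * exp (- L))"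
    using exp_add[of "y * L / \<kappa>" "- L"] by simp
  moreover have "A * exp (- L) * (exp (y * L / \<kappa>) - 1) = A * (exp (y * L / \<kappa>) * exp (- L)) - A * exp (- L)"
    by (simp add: algebra_simps)
  ultimately have step1: "t * P / 2 - A * exp (- L) * (exp (t / 2) - 1) \<le> y - A * exp (y * L / \<kappa> - L) + A * exp (- L)"
    using y_def by linarith
  have AeL: "A * exp (- L) < 1 / L" using LE Lp by (simp add: exp_minus field_simps)
  have kc0: "\<kappa> * c0 \<ge> K + 1" unfolding c0_def \<kappa>_def using K Lp pi_gt_zero
    by (simp add: field_simps add_nonneg_nonneg)
  have k_small: "\<kappa> - \<kappa> * c0 / L \<le> pi - 1 / L"
  proof -
    have "\<kappa> * c0 / L \<ge> (K + 1) / L" using kc0 Lp by (simp add: divide_right_mono)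
    then show ?thesis unfolding \<kappa>_def by (simp add: diff_divide_distrib add_divide_distrib)
  qed
  show ?thesis
  proof (cases "y \<le> \<kappa> * (1 - c0 / L)")
    case True
    have "y - A * exp (y * L / \<kappa> - L) + A * exp (- L) \<le> \<kappa> * (1 - c0 / L) + A * exp (- L)"
      using True A by (smt (verit) exp_gt_zero mult_pos_pos)
    also have "\<dots> < pi" using k_small AeL by (simp add: right_diff_distrib)
    finally show ?thesis using step1 by linarith
  next
    case False
    define \<tau> where "\<tau> = y / \<kappa> - 1"
    have ty: "y = \<kappa> * (1 + \<tau>)" using kpos by (simp add: \<tau>_def field_simps)
    have tau_gt: "\<tau> > - c0 / L" using False kpos unfolding \<tau>_def by (simp add: field_simps)
    have ex: "y * L / \<kappa> - L = \<tau> * L" using kpos by (simp add: \<tau>_def field_simps)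
    have tang: "exp (- c0) * (1 + (\<tau> * L + c0)) \<le> exp (\<tau> * L)"
      using exp_tangent[of "- c0" "\<tau> * L"] by simp
    have coef: "\<kappa> - A * exp (- c0) * L \<le> 0"
    proof -
      have "(pi + K) * exp c0 / A \<le> L" by (rule LA)
      then have "(pi + K) * exp c0 \<le> L * A" using A by (simp add: divide_le_eq)
      then have "(pi + K) \<le> L * A * exp (- c0)" by (simp add: exp_minus field_simps)
      then show ?thesis using kle by (simp add: mult_ac)
    qed
    have "y - A * exp (y * L / \<kappa> - L) + A * exp (- L)
        \<le> \<kappa> * (1 + \<tau>) - A * (exp (- c0) * (1 + (\<tau> * L + c0))) + A * exp (- L)"
    proof -
      have "A * (exp (- c0) * (1 + (\<tau> * L + c0))) \<le> A * exp (\<tau> * L)"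
        using tang A by (intro mult_left_mono) auto
      then show ?thesis unfolding ex using ty by linarith
    qed
    also have "\<dots> = \<kappa> - A * exp (- c0) * (1 + c0) + A * exp (- L) + \<tau> * (\<kappa> - A * exp (- c0) * L)"
      by (simp add: algebra_simps)
    also have "\<tau> * (\<kappa> - A * exp (- c0) * L) \<le> (- c0 / L) * (\<kappa> - A * exp (- c0) * L)"
      using tau_gt coef by (intro mult_right_mono_neg) auto
    also have "(- c0 / L) * (\<kappa> - A * exp (- c0) * L) = - (\<kappa> * c0 / L) + A * exp (- c0) * c0"
      using Lp by (simp add: field_simps)
    finally have "y - A * exp (y * L / \<kappa> - L) + A * exp (- L)
        \<le> (\<kappa> - \<kappa> * c0 / L) - A * exp (- c0) + A * exp (- L)"
      by (simp add: algebra_simps)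
    also have "\<dots> < pi"
    proof -
      have "exp (- L) < exp (- c0)" using Lc by simp
      then have "A * exp (- L) < A * exp (- c0)" using A by simp
      moreover have "1 / L > 0" using Lp by simp
      ultimately show ?thesis using k_small by linarith
    qed
    finally show ?thesis using step1 by linarith
  qed
qed


lemma set_integrable_bounded:
  fixes f :: "real \<Rightarrow> real"
  assumes f: "f \<in> borel_measurable borel" and B: "\<And>x. \<bar>f x\<bar> \<le> B"
  shows "set_integrable lborel {a<..<b} f"
proof -
  have B0: "0 \<le> B" using B[of 0] by linarith
  have ind: "integrable lborel (\<lambda>x::real. indicator {a..b} x *\<^sub>R B)"
    using borel_integrable_atLeastAtMost'[of a b "\<lambda>_. B"] unfolding set_integrable_def by simp
  show ?thesis unfolding set_integrable_def
  proof (rule Bochner_Integration.integrable_bound[OF ind])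
    show "(\<lambda>x. indicator {a<..<b} x *\<^sub>R f x) \<in> borel_measurable lborel" using f by measurable
    show "AE x in lborel. norm (indicator {a<..<b} x *\<^sub>R f x) \<le> norm (indicator {a..b} x *\<^sub>R B)"
      using B B0 by (intro AE_I2) (auto simp: indicator_def)
  qed
qed

lemma exp_lip: assumes "x \<le> M" "y \<le> M" shows "\<bar>exp x - exp y\<bar> \<le> \<bar>x - y\<bar> * exp (M::real)"
proof -
  have main: "\<bar>exp q - exp p\<bar> \<le> \<bar>q - p\<bar> * exp M" if "p < q" "q \<le> M" for p q :: real
  proof -
    have "\<exists>z>p. z < q \<and> exp q - exp p = (q - p) * exp z"
      by (rule MVT2[OF that(1)]) (rule DERIV_exp)
    then obtain z where z: "z < q" "exp q - exp p = (q - p) * exp z" by blast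
    have "exp z \<le> exp M" using z that by simp
    then have "(q - p) * exp z \<le> (q - p) * exp M" using that by (intro mult_left_mono) auto
    then show ?thesis using z that by simp
  qed
  show ?thesis
  proof (cases x y rule: linorder_cases)
    case less then show ?thesis using main[OF less assms(2)] by (simp add: abs_minus_commute)
  next
    case greater then show ?thesis using main[OF greater assms(1)] by simp
  qed simp
qed

definition psi :: "real \<Rightarrow> real \<Rightarrow> (real \<Rightarrow> real) \<Rightarrow> real \<Rightarrow> real" where
  "psi a b v t = (LINT x:{a<..<b}|lborel. v x * exp (t / 2 * v x))"

lemma psi_integrable:
  fixes v :: "real \<Rightarrow> real" and t :: real
  assumes v: "v \<in> borel_measurable borel" "\<And>x. 0 \<le> v x" "\<And>x. v x \<le> 1" and t: "0 \<le> t"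
  shows "set_integrable lborel {a<..<b} (\<lambda>x. v x * exp (t / 2 * v x))"
proof (rule set_integrable_bounded)
  show "(\<lambda>x. v x * exp (t / 2 * v x)) \<in> borel_measurable borel" using v(1) by measurable
  fix x
  have "exp (t / 2 * v x) \<le> exp (t / 2)" using v(3)[of x] t by (simp add: mult_left_le)
  moreover have "v x * exp (t / 2 * v x) \<le> 1 * exp (t / 2)"
    using v(2,3)[of x] calculation by (intro mult_mono) auto
  ultimately show "\<bar>v x * exp (t / 2 * v x)\<bar> \<le> exp (t / 2)"
    using v(2)[of x] by simp
qed

lemma psi_continuous:
  fixes v :: "real \<Rightarrow> real"
  assumes v: "v \<in> borel_measurable borel" "\<And>x. 0 \<le> v x" "\<And>x. v x \<le> 1" and ab: "a < b" and T: "0 \<le> T"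
  shows "continuous_on {0..T} (psi a b v)"
proof -
  define C where "C = (b - a) * exp (T / 2) / 2"
  have C: "0 \<le> C" using ab by (simp add: C_def)
  have mI: "measure lborel {a<..<b} = b - a" using ab by simp
  have "C-lipschitz_on {0..T} (psi a b v)"
  proof (rule lipschitz_onI[OF _ C])
    fix t1 t2 assume t1: "t1 \<in> {0..T}" and t2: "t2 \<in> {0..T}"
    let ?g = "\<lambda>t x. v x * exp (t / 2 * v x)"
    have i1: "set_integrable lborel {a<..<b} (?g t1)" using t1 by (intro psi_integrable v) auto
    have i2: "set_integrable lborel {a<..<b} (?g t2)" using t2 by (intro psi_integrable v) auto
    define D where "D = \<bar>t1 - t2\<bar> * exp (T / 2) / 2"
    have pw: "\<bar>?g t1 x - ?g t2 x\<bar> \<le> D" for x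
    proof -
      have a1: "t1 / 2 * v x \<le> T / 2" using mult_left_le[of "v x" "t1 / 2"] t1 v(2,3)[of x] by auto
      have a2: "t2 / 2 * v x \<le> T / 2" using mult_left_le[of "v x" "t2 / 2"] t2 v(2,3)[of x] by auto
      have "\<bar>?g t1 x - ?g t2 x\<bar> = v x * \<bar>exp (t1 / 2 * v x) - exp (t2 / 2 * v x)\<bar>"
        using v(2)[of x] by (simp add: abs_mult right_diff_distrib[symmetric])
      also have "\<dots> \<le> 1 * (\<bar>t1 / 2 * v x - t2 / 2 * v x\<bar> * exp (T / 2))"
        using v(2,3)[of x] exp_lip[OF a1 a2] by (intro mult_mono) auto
      also have "\<bar>t1 / 2 * v x - t2 / 2 * v x\<bar> = \<bar>t1 - t2\<bar> / 2 * v x"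
        using v(2)[of x] by (simp add: abs_mult left_diff_distrib[symmetric] diff_divide_distrib[symmetric])
      also have "\<dots> \<le> \<bar>t1 - t2\<bar> / 2" using v(2,3)[of x] by (simp add: mult_left_le)
      finally show ?thesis by (simp add: D_def mult_right_mono)
    qed
    have pw1: "?g t1 x \<le> ?g t2 x + D" and pw2: "?g t2 x \<le> ?g t1 x + D" for x
      using pw[of x] by (simp_all add: abs_le_iff)
    have iD: "set_integrable lborel {a<..<b} (\<lambda>_. D)"
      by (rule set_integrable_bounded) auto
    have intD: "(LINT x:{a<..<b}|lborel. D) = (b - a) * D"
      using ab by (subst set_integral_const) auto
    have d1: "(LINT x:{a<..<b}|lborel. ?g t1 x) - (LINT x:{a<..<b}|lborel. ?g t2 x) \<le> (b - a) * D"
    proof -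
      have "(LINT x:{a<..<b}|lborel. ?g t1 x) \<le> (LINT x:{a<..<b}|lborel. ?g t2 x + D)"
        by (rule set_integral_mono[OF i1 set_integral_add(1)[OF i2 iD] pw1])
      also have "\<dots> = (LINT x:{a<..<b}|lborel. ?g t2 x) + (b - a) * D"
        using set_integral_add(2)[OF i2 iD] intD by simp
      finally show ?thesis by simp
    qed
    have d2: "(LINT x:{a<..<b}|lborel. ?g t2 x) - (LINT x:{a<..<b}|lborel. ?g t1 x) \<le> (b - a) * D"
    proof -
      have "(LINT x:{a<..<b}|lborel. ?g t2 x) \<le> (LINT x:{a<..<b}|lborel. ?g t1 x + D)"
        by (rule set_integral_mono[OF i2 set_integral_add(1)[OF i1 iD] pw2])
      also have "\<dots> = (LINT x:{a<..<b}|lborel. ?g t1 x) + (b - a) * D"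
        using set_integral_add(2)[OF i1 iD] intD by simp
      finally show ?thesis by simp
    qed
    have "(b - a) * D = C * dist t1 t2" by (simp add: C_def D_def dist_real_def)
    then show "dist (psi a b v t1) (psi a b v t2) \<le> C * dist t1 t2"
      using d1 d2 unfolding psi_def dist_real_def by linarith
  qed
  then show ?thesis by (rule lipschitz_on_continuous_on)
qed

lemma set_int_lower:
  fixes g :: "real \<Rightarrow> real"
  assumes g: "set_integrable lborel {a<..<b} g" and nn: "\<And>x. x \<in> {a<..<b} \<Longrightarrow> 0 \<le> g x"
    and S: "{p..q} \<subseteq> {a<..<b}" "p \<le> q" and G: "0 \<le> G" "\<And>x. x \<in> {p..q} \<Longrightarrow> G \<le> g x"
  shows "G * (q - p) \<le> (LINT x:{a<..<b}|lborel. g x)"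
proof -
  have i: "set_integrable lborel {a<..<b} (\<lambda>x. indicator {p..q} x * G)"
    by (rule set_integrable_bounded) (use G in \<open>auto simp: indicator_def\<close>)
  have "(LINT x:{a<..<b}|lborel. indicator {p..q} x * G) \<le> (LINT x:{a<..<b}|lborel. g x)"
    by (rule set_integral_mono[OF i g]) (use nn G in \<open>auto simp: indicator_def\<close>)
  moreover have "(LINT x:{a<..<b}|lborel. indicator {p..q} x * G) = (LINT x:{p..q}|lborel. G)"
    unfolding set_lebesgue_integral_def
    by (intro Bochner_Integration.integral_cong refl) (use S in \<open>auto simp: indicator_def\<close>)
  moreover have "(LINT x:{p..q}|lborel. G) = G * (q - p)"
    using S by (subst set_integral_const) auto
  ultimately show ?thesis by linarith
qed


lemma Kc_pos: "0 < Kc" unfolding Kc_def using C1_ge pi_gt_zero by linarith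

lemma exp_big: assumes "L \<ge> 4 * A" "A > 0" shows "A * L < exp (L::real)"
proof -
  have L0: "L > 0" using assms by simp
  have "1 + L / 2 \<le> exp (L / 2)" by (rule exp_ge_add_one_self)
  then have "(1 + L / 2)\<^sup>2 \<le> (exp (L / 2))\<^sup>2" using L0 by (intro power_mono) auto
  also have "(exp (L / 2))\<^sup>2 = exp L" by (simp add: exp_double[symmetric])
  finally have e: "(1 + L / 2)\<^sup>2 \<le> exp L" .
  have "A * L \<le> L / 4 * L" using assms L0 by (intro mult_right_mono) auto
  also have "\<dots> < (1 + L / 2)\<^sup>2" using L0 by (simp add: power2_eq_square field_simps)
  finally show ?thesis using e by linarith
qed

lemma exists_good:
  assumes ab: "a < b" and lam: "0 < lam" "lam < lambda1 a b"
  shows "\<exists>u\<in>Nehari a b lam. Jfun a b lam u < pi"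
proof -
  define h where "h = (b - a) / 2"
  have h: "h > 0" using ab by (simp add: h_def)
  define A where "A = 2 * lam * h"
  have A: "A > 0" using h lam by (simp add: A_def)
  define c0 where "c0 = (Kc + 1) / pi"
  have c0: "c0 > 0" using Kc_pos by (simp add: c0_def)
  define L where "L = 2 + c0 + (pi + Kc) * exp c0 / A + 4 * A"
  have LL: "(pi + Kc) * exp c0 / A \<ge> 0" using A Kc_pos by simp
  have L1: "L \<ge> 1" and Lc: "L > c0" and LA: "L \<ge> (pi + Kc) * exp c0 / A" and L4: "L \<ge> 4 * A"
    using c0 LL A by (auto simp: L_def)
  have L: "L > 0" using L1 by simp
  have LE: "A * L < exp L" by (rule exp_big[OF L4 A])
  define w where "w = wfun L a b"
  define P where "P = Hinner w w"
  define v where "v = (\<lambda>x. (w x)\<^sup>2)"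
  have wH: "w \<in> Hspace a b" unfolding w_def by (rule wfun_Hspace[OF L ab])
  have wnz: "\<not> Hzero w" unfolding w_def by (rule wfun_not_Hzero[OF L ab])
  have vm: "v \<in> borel_measurable borel" unfolding v_def w_def by measurable
  have v0: "0 \<le> v x" for x by (simp add: v_def)
  have v1: "v x \<le> 1" for x
    using wfun_bounds[OF L, of a b x] by (simp add: v_def w_def power_le_one)
  have Ple: "P \<le> (pi + Kc / L) / L"
    using Hinner_wfun_le[OF L ab] L by (simp add: P_def w_def power2_eq_square add_divide_distrib)
  have I0: "(LINT x:{a<..<b}|lborel. (w x)\<^sup>2) = psi a b v 0" by (simp add: psi_def v_def)
  have lamP: "lam * psi a b v 0 < P"
    using lam_lt_Hinner[OF lam wH wnz] I0 by (simp add: P_def)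
  have psi0: "0 < psi a b v 0" using Iint_pos[OF wH wnz] I0 by simp
  have Ppos: "P > 0" using lamP psi0 lam by (smt (verit) mult_pos_pos)
  define m where "m = exp (- L)"
  have m: "0 < m" "m < 1" using L by (auto simp: m_def)
  define r where "r = m * h"
  have r: "0 < r" "r < h" using m h by (auto simp: r_def)
  define c where "c = (a + b) / 2"
  have S: "{c - r .. c + r} \<subseteq> {a<..<b}" "c - r \<le> c + r"
    using r by (auto simp: c_def h_def field_simps)
  have vS: "v x = 1" if "x \<in> {c - r .. c + r}" for x
  proof -
    have "\<bar>x - c\<bar> \<le> r" using that by (auto simp: abs_le_iff)
    then have "\<bar>x - (a + b) / 2\<bar> \<le> exp (- L) * ((b - a) / 2)"
      by (simp add: c_def r_def m_def h_def)
    then show ?thesis using wfun_inner[OF ab] by (simp add: v_def w_def)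
  qed
  define \<phi> where "\<phi> = (\<lambda>t. P - lam * psi a b v t)"
  define T where "T = P / (lam * r)"
  have T: "0 \<le> T" using Ppos lam r by (simp add: T_def)
  have psiT: "exp (T / 2) * ((c + r) - (c - r)) \<le> psi a b v T"
    unfolding psi_def
  proof (rule set_int_lower[OF psi_integrable[OF vm v0 v1 T] _ S])
    fix x show "0 \<le> v x * exp (T / 2 * v x)" using v0[of x] by simp
  next
    show "0 \<le> exp (T / 2)" by simp
    fix x assume "x \<in> {c - r .. c + r}"
    then show "exp (T / 2) \<le> v x * exp (T / 2 * v x)" using vS by simp
  qed
  have "T / 2 < exp (T / 2)" using exp_ge_add_one_self[of "T / 2"] by linarith
  then have "lam * (2 * r) * (T / 2) < lam * (2 * r) * exp (T / 2)"
    using lam r by (intro mult_strict_left_mono) auto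
  moreover have "lam * (2 * r) * (T / 2) = P" using lam r by (simp add: T_def field_simps)
  moreover have "lam * (2 * r) * exp (T / 2) \<le> lam * psi a b v T"
  proof -
    have "(2 * r) * exp (T / 2) \<le> psi a b v T" using psiT by (simp add: mult_ac)
    then have "lam * ((2 * r) * exp (T / 2)) \<le> lam * psi a b v T" using lam by (intro mult_left_mono) auto
    then show ?thesis by (simp add: mult_ac)
  qed
  ultimately have phiT: "\<phi> T \<le> 0" by (simp add: \<phi>_def)
  have phi0: "0 \<le> \<phi> 0" using lamP by (simp add: \<phi>_def)
  have cont: "continuous_on {0..T} \<phi>"
    unfolding \<phi>_def by (intro continuous_intros psi_continuous[OF vm v0 v1 ab T])
  obtain t where t: "0 \<le> t" "t \<le> T" "\<phi> t = 0"
    using IVT2'[of \<phi> T 0 0, OF phiT phi0 T cont] by blast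
  have tpos: "t > 0" using t lamP by (cases "t = 0") (auto simp: \<phi>_def)
  define s where "s = sqrt t"
  have s2: "s\<^sup>2 = t" using t by (simp add: s_def)
  have s0: "s \<noteq> 0" using tpos by (simp add: s_def)
  define u where "u = (\<lambda>x. s * w x)"
  have uH: "u \<in> Hspace a b" unfolding u_def by (rule Hspace_scale[OF wH])
  have unz: "\<not> Hzero u"
  proof
    assume "Hzero u"
    then have "AE x in lborel. w x = 0" using s0 by (simp add: Hzero_def u_def)
    then show False using wnz by (simp add: Hzero_def)
  qed
  have Hu: "Hinner u u = t * P" unfolding u_def Hinner_scale s2 P_def ..
  have pw1: "(\<lambda>x. u x * u x * exp ((1/2) * (u x)\<^sup>2)) = (\<lambda>x. t * (v x * exp (t / 2 * v x)))"
  proof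
    fix x
    have "u x * u x = t * v x" using s2 by (simp add: u_def v_def power2_eq_square mult_ac)
    moreover have "(1/2) * (u x)\<^sup>2 = t / 2 * v x" using s2 by (simp add: u_def v_def power_mult_distrib)
    ultimately show "u x * u x * exp ((1/2) * (u x)\<^sup>2) = t * (v x * exp (t / 2 * v x))" by simp
  qed
  have Ju: "Jderiv a b lam u u = 0"
  proof -
    have "Jderiv a b lam u u = t * P - lam * (t * psi a b v t)"
      unfolding Jderiv_def Hu pw1 psi_def by simp
    also have "\<dots> = t * \<phi> t" by (simp add: \<phi>_def algebra_simps)
    finally show ?thesis using t by simp
  qed
  have uN: "u \<in> Nehari a b lam" using uH unz Ju by (simp add: Nehari_def)
  have pw2: "(\<lambda>x. exp ((1/2) * (u x)\<^sup>2) - 1) = (\<lambda>x. exp (t / 2 * v x) - 1)"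
  proof
    fix x show "exp ((1/2) * (u x)\<^sup>2) - 1 = exp (t / 2 * v x) - 1"
      using s2 by (simp add: u_def v_def power_mult_distrib)
  qed
  have Elow: "(exp (t / 2) - 1) * ((c + r) - (c - r)) \<le> (LINT x:{a<..<b}|lborel. exp (t / 2 * v x) - 1)"
  proof (rule set_int_lower[OF _ _ S])
    show "set_integrable lborel {a<..<b} (\<lambda>x. exp (t / 2 * v x) - 1)"
    proof (rule set_integrable_bounded)
      show "(\<lambda>x. exp (t / 2 * v x) - 1) \<in> borel_measurable borel" using vm by measurable
      fix x
      have "exp (t / 2 * v x) \<le> exp (t / 2)" using mult_left_le[of "v x" "t / 2"] v0 v1 t by auto
      moreover have "1 \<le> exp (t / 2 * v x)" using v0[of x] t by simp
      moreover have "0 < exp (t / 2)" by simp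
      ultimately show "\<bar>exp (t / 2 * v x) - 1\<bar> \<le> exp (t / 2)" unfolding abs_le_iff by linarith
    qed
    fix x show "0 \<le> exp (t / 2 * v x) - 1" using v0[of x] t by simp
  next
    show "0 \<le> exp (t / 2) - 1" using t by simp
    fix x assume "x \<in> {c - r .. c + r}"
    then show "exp (t / 2) - 1 \<le> exp (t / 2 * v x) - 1" using vS by simp
  qed
  have "Jfun a b lam u = t * P / 2 - lam * (LINT x:{a<..<b}|lborel. exp (t / 2 * v x) - 1)"
    unfolding Jfun_def Hnorm_sq Hu pw2 by simp
  also have "\<dots> \<le> t * P / 2 - lam * ((exp (t / 2) - 1) * (2 * r))"
    using Elow lam by (simp add: mult_left_mono)
  also have "lam * ((exp (t / 2) - 1) * (2 * r)) = A * exp (- L) * (exp (t / 2) - 1)"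
    by (simp add: A_def r_def m_def mult_ac)
  also have "t * P / 2 - A * exp (- L) * (exp (t / 2) - 1) < pi"
    by (rule final_ineq[OF A less_imp_le[OF Kc_pos] L1 Lc[unfolded c0_def] LA[unfolded c0_def] LE Ppos Ple less_imp_le[OF tpos]])
  finally show ?thesis using uN by blast
qed

theorem lemma4p4:
  fixes a b lam :: real
  assumes "a < b" and "0 < lam" and "lam < lambda1 a b"
  shows "aJ a b lam < pi"
proof -
  obtain u where u: "u \<in> Nehari a b lam" "Jfun a b lam u < pi"
    using exists_good[OF assms] by blast
  have "bdd_below (Jfun a b lam ` Nehari a b lam)"
    using Jfun_nonneg_Nehari[OF assms(2,3)] by (intro bdd_belowI[of _ 0]) auto
  then have "aJ a b lam \<le> Jfun a b lam u"
    unfolding aJ_def using u(1) by (intro cInf_lower) auto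
  then show ?thesis using u(2) by linarith
qed


end
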